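(* Let $A,\mu=\varrho_0\,dx,\nu=\varrho_1\,dx,r$ be as in the setting below, and let $\varphi\colon A\to[0,r]$ be a continuous function with convex sub-level sets such that $T=\varphi\,{\rm n}$ satisfies $\mu\circ T^{-1}=\nu$ and $T$ is injective on a set of full $\mu$-measure. Assume in addition that $\varphi$ is of class $C^2$ on the interior of $A$ with $\nabla\varphi\ne 0$ there, so that ${\rm n}=\nabla\varphi/|\nabla\varphi|$. Then for almost every $x\in A$, $$\det DT(x)=|\nabla\varphi(x)|\,\varphi(x)^{d-1}K(x)\quad\text{and}\quad \varrho_0(x)=\varrho_1\big(\varphi(x){\rm n}(x)\big)\,|\nabla\varphi(x)|\,\varphi(x)^{d-1}K(x),$$ where $K(x)$ is the Gauss curvature at $x$ of the level set $\{y:\varphi(y)=\varphi(x)\}$.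
   Context: Setting: $d\ge2$, $A\subset\mathbb{R}^d$ compact convex, $\mu=\varrho_0\,dx$ a probability measure on $A$ equivalent to Lebesgue measure on $A$, $B_r=\{|x|\le r\}$, $\nu=\varrho_1\,dx$ a probability measure on $B_r$ equivalent to Lebesgue measure on $B_r$. For a smooth hypersurface $M$ with Gauss map ${\rm n}$, the Gauss curvature at $x$ is $K(x)=\det(\langle\partial_{e_i}{\rm n},e_j\rangle)_{i,j=2}^d$ for an orthonormal basis $e_2,\dots,e_d$ of $T_xM$. *)

theory Defs
  imports "HOL-Analysis.Analysis"
begin

definition tangent_onb :: "real^'n \<Rightarrow> (nat \<Rightarrow> real^'n) \<Rightarrow> bool" where
  "tangent_onb v e \<longleftrightarrow>
     (\<forall>i\<in>{2..CARD('n)}. \<forall>j\<in>{2..CARD('n)}. e i \<bullet> e j = (if i = j then 1 else 0)) \<and>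
     (\<forall>i\<in>{2..CARD('n)}. e i \<bullet> v = 0)"

text \<open>Gauss curvature at x of the hypersurface through x whose Gauss map is (the
  restriction of) the unit normal field nmap: the determinant of the
  (d-1)x(d-1) matrix with entries the inner product of the derivative of nmap in
  direction e i with e j, for an orthonormal basis e 2..e d of the tangent space
  (nmap x)-perp.\<close>
definition gauss_curvature :: "(real^'n \<Rightarrow> real^'n) \<Rightarrow> real^'n \<Rightarrow> real" where
  "gauss_curvature nmap x =
     (THE k. \<forall>e. tangent_onb (nmap x) e \<longrightarrow>
        k = (\<Sum>p | p permutes {2..CARD('n)}. of_int (sign p) *
               (\<Prod>i\<in>{2..CARD('n)}. frechet_derivative nmap (at x) (e i) \<bullet> e (p i))))"

end

theory Submission
  imports Defs
begin

typedef 'a wo = "UNIV :: 'a set" by auto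

definition wo_idx :: "'a wo \<Rightarrow> nat" where
  "wo_idx x = to_nat_on (UNIV :: 'a set) (Rep_wo x)"

lemma inj_wo_idx: "inj (wo_idx :: ('a::finite) wo \<Rightarrow> nat)"
proof -
  have "inj_on (to_nat_on (UNIV :: 'a set)) UNIV"
    by (rule inj_on_to_nat_on) (simp add: countable_finite)
  then show ?thesis unfolding wo_idx_def inj_def
    by (metis Rep_wo_inject UNIV_I inj_onD)
qed

instance wo :: (finite) finite
proof
  have "(UNIV :: 'a wo set) = Abs_wo ` UNIV"
    by (metis Abs_wo_cases surj_def)
  then show "finite (UNIV :: 'a wo set)" by (metis finite finite_imageI)
qed

instantiation wo :: (finite) linorder
begin
definition less_eq_wo :: "'a wo \<Rightarrow> 'a wo \<Rightarrow> bool" where "less_eq_wo x y \<longleftrightarrow> wo_idx x \<le> wo_idx y"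
definition less_wo :: "'a wo \<Rightarrow> 'a wo \<Rightarrow> bool" where "less_wo x y \<longleftrightarrow> wo_idx x < wo_idx y"
instance
proof
  have I: "inj (wo_idx :: 'a wo \<Rightarrow> nat)" by (rule inj_wo_idx)
  fix x y z :: "'a wo"
  show "(x < y) = (x \<le> y \<and> \<not> y \<le> x)" by (auto simp: less_eq_wo_def less_wo_def)
  show "x \<le> x" by (auto simp: less_eq_wo_def)
  show "x \<le> y \<Longrightarrow> y \<le> z \<Longrightarrow> x \<le> z" by (auto simp: less_eq_wo_def)
  show "x \<le> y \<Longrightarrow> y \<le> x \<Longrightarrow> x = y" using I by (auto simp: less_eq_wo_def inj_def)
  show "x \<le> y \<or> y \<le> x" by (auto simp: less_eq_wo_def)
qed
end

instance wo :: (finite) wellorder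
proof
  fix P :: "'a wo \<Rightarrow> bool" and a
  assume H: "\<And>x. (\<And>y. y < x \<Longrightarrow> P y) \<Longrightarrow> P x"
  show "P a"
    by (induction a rule: measure_induct_rule[of wo_idx]) (auto intro: H simp: less_wo_def)
qed

definition Pw :: "real^'n \<Rightarrow> real^('n wo)" where "Pw x = (\<chi> i. x $ Rep_wo i)"
definition Qw :: "real^('n wo) \<Rightarrow> real^'n" where "Qw y = (\<chi> j. y $ Abs_wo j)"

lemma Pw_nth[simp]: "Pw x $ i = x $ Rep_wo i" by (simp add: Pw_def)
lemma Qw_nth[simp]: "Qw y $ j = y $ Abs_wo j" by (simp add: Qw_def)
lemma QP[simp]: "Qw (Pw x) = x" by (simp add: vec_eq_iff Abs_wo_inverse)
lemma PQ[simp]: "Pw (Qw y) = y" by (simp add: vec_eq_iff Rep_wo_inverse)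
lemma linear_Pw: "linear Pw" by (rule linearI) (simp_all add: vec_eq_iff)
lemma linear_Qw: "linear Qw" by (rule linearI) (simp_all add: vec_eq_iff)
lemma bij_Pw: "bij Pw" by (metis QP PQ bij_def inj_def surj_def)
lemma bij_Qw: "bij Qw" by (metis QP PQ bij_def inj_def surj_def)
lemma Pw_meas[measurable]: "Pw \<in> borel_measurable borel"
  by (intro borel_measurable_continuous_onI linear_continuous_on linear_conv_bounded_linear[THEN iffD1] linear_Pw)
lemma Qw_meas[measurable]: "Qw \<in> borel_measurable borel"
  by (intro borel_measurable_continuous_onI linear_continuous_on linear_conv_bounded_linear[THEN iffD1] linear_Qw)

lemma prod_Basis_cart: "(\<Prod>b\<in>(Basis :: (real^'n) set). f b) = (\<Prod>i\<in>UNIV. f (axis i 1))"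
proof -
  have "(Basis :: (real^'n) set) = (\<lambda>i. axis i 1) ` UNIV"
    by (auto simp: Basis_vec_def)
  moreover have "inj (\<lambda>i::'n. axis i (1::real))" by (auto simp: inj_def axis_eq_axis)
  ultimately show ?thesis by (metis (no_types, lifting) prod.reindex_cong)
qed

lemma lborel_Pw: "distr lborel borel (Pw :: real^'n \<Rightarrow> _) = lborel"
proof (rule lborel_eqI[symmetric])
  show "sets (distr lborel borel (Pw :: real^'n \<Rightarrow> _)) = sets borel" by simp
  fix l u :: "real^('n wo)"
  assume le: "\<And>b. b \<in> Basis \<Longrightarrow> l \<bullet> b \<le> u \<bullet> b"
  have le': "l $ i \<le> u $ i" for i using le[of "axis i 1"] by (simp add: cart_eq_inner_axis)
  have pre: "Pw -` box l u = box (Qw l) (Qw u)"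
    by (auto simp: mem_box_cart) (metis Abs_wo_inverse UNIV_I Rep_wo_inverse)+
  have "emeasure (distr lborel borel Pw) (box l u) = emeasure lborel (box (Qw l) (Qw u))"
    by (simp add: emeasure_distr pre)
  also have "\<dots> = (\<Prod>i\<in>UNIV. ennreal (u $ Abs_wo i - l $ Abs_wo i))"
  proof (subst emeasure_lborel_box)
    show "Qw l \<bullet> b \<le> Qw u \<bullet> b" if "b \<in> Basis" for b
      using that le' by (auto simp: Basis_vec_def inner_axis)
    show "ennreal (\<Prod>b\<in>Basis. (Qw u - Qw l) \<bullet> b) = (\<Prod>i\<in>UNIV. ennreal (u $ Abs_wo i - l $ Abs_wo i))"
      using le' by (simp add: prod_Basis_cart cart_eq_inner_axis[symmetric] prod_ennreal)
  qed
  also have "\<dots> = (\<Prod>i\<in>UNIV. ennreal (u $ i - l $ i))"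
  proof -
    have "bij_betw Abs_wo (UNIV::'n set) UNIV"
      by (metis Abs_wo_inverse Rep_wo_inverse UNIV_I bij_betw_byWitness subsetI)
    then show ?thesis by (rule prod.reindex_bij_betw)
  qed
  also have "\<dots> = (\<Prod>b\<in>Basis. ennreal ((u - l) \<bullet> b))"
    by (simp add: prod_Basis_cart cart_eq_inner_axis[symmetric])
  also have "\<dots> = ennreal (\<Prod>b\<in>Basis. (u - l) \<bullet> b)"
    using le by (intro prod_ennreal) (simp add: inner_diff_left)
  finally show "emeasure (distr lborel borel Pw) (box l u) = (\<Prod>b\<in>Basis. (u - l) \<bullet> b)" .
qed

lemma distr_lebesgue_lborel_Pw: "distr lebesgue lborel (Pw :: real^'n \<Rightarrow> _) = lborel"
proof -
  have m: "Pw \<in> (lborel :: (real^'n) measure) \<rightarrow>\<^sub>M lborel" by simp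
  have "distr lebesgue lborel (Pw :: real^'n \<Rightarrow> _) = distr lborel lborel Pw"
    by (rule distr_completion[OF m])
  also have "\<dots> = distr lborel borel (Pw :: real^'n \<Rightarrow> _)"
    by (rule distr_cong) auto
  finally show ?thesis using lborel_Pw by simp
qed

lemma Pw_lebesgue_meas: "Pw \<in> (lebesgue :: (real^'n) measure) \<rightarrow>\<^sub>M lebesgue"
proof -
  have m: "Pw \<in> (lebesgue :: (real^'n) measure) \<rightarrow>\<^sub>M lborel"
    by (rule measurable_completion) simp
  show ?thesis
    by (rule completion.measurable_completion2[OF m]) (simp add: distr_lebesgue_lborel_Pw)
qed

lemma distr_lebesgue_Pw: "distr lebesgue lebesgue (Pw :: real^'n \<Rightarrow> _) = lebesgue"
proof -
  have m: "Pw \<in> (lebesgue :: (real^'n) measure) \<rightarrow>\<^sub>M lborel"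
    by (rule measurable_completion) simp
  have "completion (distr lebesgue lborel Pw) = distr lebesgue (completion lborel) (Pw :: real^'n \<Rightarrow> _)"
    by (rule completion.completion_distr_eq[OF m]) (simp add: distr_lebesgue_lborel_Pw)
  then show ?thesis by (simp add: distr_lebesgue_lborel_Pw)
qed

definition leib :: "'a set \<Rightarrow> ('a \<Rightarrow> 'a \<Rightarrow> real) \<Rightarrow> real" where
  "leib I m = (\<Sum>p | p permutes I. of_int (sign p) * (\<Prod>i\<in>I. m i (p i)))"

lemma leib_reindex:
  assumes bij: "bij_betw f A B" and fin: "finite A"
  shows "leib B m = leib A (\<lambda>i j. m (f i) (f j))"
proof -
  let ?F = "\<lambda>\<pi> x. if x \<in> B then f (\<pi> (inv_into A f x)) else x"
  have bF: "bij_betw ?F {\<pi>. \<pi> permutes A} {\<pi>. \<pi> permutes B}"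
    by (rule bij_betw_permutations[OF bij])
  have "leib B m = (\<Sum>\<pi>\<in>{\<pi>. \<pi> permutes A}. of_int (sign (?F \<pi>)) * (\<Prod>i\<in>B. m i (?F \<pi> i)))"
    unfolding leib_def by (rule sum.reindex_bij_betw[OF bF, symmetric])
  also have "\<dots> = leib A (\<lambda>i j. m (f i) (f j))"
    unfolding leib_def
  proof (rule sum.cong[OF refl])
    fix \<pi> assume "\<pi> \<in> {\<pi>. \<pi> permutes A}"
    then have pA: "\<pi> permutes A" by simp
    interpret pb: permutes_bij_finite \<pi> A B f "inv_into A f" "?F \<pi>"
      by unfold_locales (use pA bij fin in \<open>auto simp: bij_betw_inv_into_left\<close>)
    have s: "sign (?F \<pi>) = sign \<pi>" using pb.sign_p' .
    have "(\<Prod>i\<in>B. m i (?F \<pi> i)) = (\<Prod>x\<in>A. m (f x) (?F \<pi> (f x)))"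
      by (rule prod.reindex_bij_betw[OF bij, symmetric])
    also have "\<dots> = (\<Prod>x\<in>A. m (f x) (f (\<pi> x)))"
      using bij by (intro prod.cong refl) (auto simp: bij_betw_inv_into_left bij_betwE)
    finally show "of_int (sign (?F \<pi>)) * (\<Prod>i\<in>B. m i (?F \<pi> i)) =
                  of_int (sign \<pi>) * (\<Prod>x\<in>A. m (f x) (f (\<pi> x)))" using s by simp
  qed
  finally show ?thesis .
qed

lemma det_leib: "det (M :: real^'n^'n) = leib UNIV (\<lambda>i j. M $ i $ j)"
  by (simp add: det_def leib_def)

lemma det_onb:
  fixes L :: "real^'n \<Rightarrow> real^'n" and f :: "'a \<Rightarrow> real^'n"
  assumes lin: "linear L" and bij: "bij_betw \<beta> (UNIV::'n set) I"
    and on: "\<And>i j. i\<in>I \<Longrightarrow> j\<in>I \<Longrightarrow> f i \<bullet> f j = (if i = j then 1 else 0)"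
  shows "det (matrix L) = leib I (\<lambda>i j. L (f i) \<bullet> f j)"
proof -
  define F :: "real^'n^'n" where "F = (\<chi> k c. f (\<beta> c) $ k)"
  have inj: "inj \<beta>" using bij by (simp add: bij_betw_def)
  have bI: "\<beta> c \<in> I" for c using bij by (auto simp: bij_betw_def)
  have FF: "transpose F ** F = mat 1"
  proof -
    have "(transpose F ** F) $ a $ b = (if a = b then 1 else 0)" for a b
    proof -
      have "(transpose F ** F) $ a $ b = f (\<beta> a) \<bullet> f (\<beta> b)"
        by (simp add: matrix_matrix_mult_def transpose_def F_def inner_vec_def)
      also have "\<dots> = (if a = b then 1 else 0)" using on[OF bI bI] inj by (auto simp: inj_def)
      finally show ?thesis .
    qed
    then show ?thesis by (simp add: vec_eq_iff mat_def)
  qed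
  have dF: "det F * det F = 1"
    using arg_cong[OF FF, of det] by (simp add: det_mul det_transpose)
  define G where "G = transpose F ** matrix L ** F"
  have LF: "(matrix L ** F) $ i $ b = L (f (\<beta> b)) $ i" for i b
  proof -
    have "(matrix L ** F) $ i $ b = (matrix L *v f (\<beta> b)) $ i"
      by (simp add: matrix_matrix_mult_def matrix_vector_mult_def F_def)
    then show ?thesis using fun_cong[OF matrix_vector_mul(2)[OF lin]] by metis
  qed
  have Gab: "G $ a $ b = f (\<beta> a) \<bullet> L (f (\<beta> b))" for a b
  proof -
    have "G = transpose F ** (matrix L ** F)" by (simp add: G_def matrix_mul_assoc)
    then have "G $ a $ b = (\<Sum>i\<in>UNIV. transpose F $ a $ i * (matrix L ** F) $ i $ b)"
      by (simp add: matrix_matrix_mult_def)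
    also have "\<dots> = f (\<beta> a) \<bullet> L (f (\<beta> b))"
      unfolding LF by (simp add: transpose_def F_def inner_vec_def)
    finally show ?thesis .
  qed
  have "det G = det F * det (matrix L) * det F"
    by (simp add: G_def det_mul det_transpose)
  then have "det G = det (matrix L)" using dF by (simp add: algebra_simps)
  then have "det (matrix L) = det (transpose G)" by (simp add: det_transpose)
  also have "\<dots> = leib UNIV (\<lambda>a b. L (f (\<beta> a)) \<bullet> f (\<beta> b))"
    by (simp add: det_leib transpose_def Gab inner_commute)
  also have "\<dots> = leib I (\<lambda>i j. L (f i) \<bullet> f j)"
    by (rule leib_reindex[OF bij, symmetric]) simp
  finally show ?thesis .
qed

lemma leib_cong:
  assumes "\<And>i j. i \<in> I \<Longrightarrow> j \<in> I \<Longrightarrow> m i j = m' i j"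
  shows "leib I m = leib I m'"
  unfolding leib_def
proof (rule sum.cong[OF refl])
  fix p assume "p \<in> {p. p permutes I}"
  then have "p i \<in> I" if "i \<in> I" for i using that by (simp add: permutes_in_image)
  then show "of_int (sign p) * (\<Prod>i\<in>I. m i (p i)) = of_int (sign p) * (\<Prod>i\<in>I. m' i (p i))"
    using assms by (metis (no_types, lifting) prod.cong)
qed

lemma leib_scale:
  assumes "finite I"
  shows "leib I (\<lambda>i j. c * m i j) = c ^ card I * leib I m"
  unfolding leib_def
  by (simp add: prod.distrib sum_distrib_left algebra_simps)

lemma leib_split:
  fixes m :: "nat \<Rightarrow> nat \<Rightarrow> real"
  assumes d: "d \<ge> 1" and zero: "\<And>i. i \<in> {2..d} \<Longrightarrow> m i 1 = 0"
  shows "leib {1..d} m = m 1 1 * leib {2..d} m"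
proof -
  let ?P1 = "{p. p permutes {1..d}}" and ?P2 = "{p. p permutes {2..d::nat}}"
  have sub: "?P2 \<subseteq> ?P1" by (auto intro: permutes_subset)
  have z: "of_int (sign p) * (\<Prod>i\<in>{1..d}. m i (p i)) = 0" if "p \<in> ?P1 - ?P2" for p
  proof -
    from that have p1: "p permutes {1..d}" and p2: "\<not> p permutes {2..d}" by auto
    have "p 1 \<noteq> 1"
    proof
      assume "p 1 = 1"
      have "p x = x" if "x \<notin> {2..d}" for x
      proof (cases "x = 1")
        case True then show ?thesis using \<open>p 1 = 1\<close> by simp
      next
        case False then have "x \<notin> {1..d}" using that by auto
        then show ?thesis using p1 by (simp add: permutes_not_in)
      qed
      then have "p permutes {2..d}" using p1 unfolding permutes_def by blast
      with p2 show False by simp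
    qed
    have "1 \<in> {1..d}" using d by simp
    then obtain j where j: "j \<in> {1..d}" "p j = 1"
      using p1 permutes_image[OF p1] by (metis imageE)
    then have "j \<noteq> 1" using \<open>p 1 \<noteq> 1\<close> by auto
    then have "j \<in> {2..d}" using j by auto
    then have "m j (p j) = 0" using zero j by simp
    then show ?thesis using j by (metis finite_atLeastAtMost mult_zero_right prod_zero)
  qed
  have "leib {1..d} m = (\<Sum>p\<in>?P2. of_int (sign p) * (\<Prod>i\<in>{1..d}. m i (p i)))"
    unfolding leib_def by (rule sum.mono_neutral_right) (use sub z finite_permutations in auto)
  also have "\<dots> = (\<Sum>p\<in>?P2. m 1 1 * (of_int (sign p) * (\<Prod>i\<in>{2..d}. m i (p i))))"
  proof (rule sum.cong[OF refl])
    fix p assume "p \<in> ?P2"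
    then have "p 1 = 1" by (simp add: permutes_not_in)
    have "{1..d} = insert 1 {2..d}" using d by auto
    then show "of_int (sign p) * (\<Prod>i\<in>{1..d}. m i (p i)) = m 1 1 * (of_int (sign p) * (\<Prod>i\<in>{2..d}. m i (p i)))"
      using \<open>p 1 = 1\<close> by simp
  qed
  also have "\<dots> = m 1 1 * leib {2..d} m" by (simp add: leib_def sum_distrib_left)
  finally show ?thesis .
qed

lemma exists_tangent_onb:
  fixes v :: "real^'n"
  assumes "v \<noteq> 0"
  shows "\<exists>e. tangent_onb v e"
proof -
  let ?S = "{x. v \<bullet> x = 0}"
  have "subspace ?S" by (simp add: subspace_hyperplane)
  then obtain B where B: "B \<subseteq> ?S" "pairwise orthogonal B" "\<And>x. x \<in> B \<Longrightarrow> norm x = 1"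
      "independent B" "card B = dim ?S"
    by (rule orthonormal_basis_subspace) blast
  have cB: "card B = CARD('n) - 1" using B(5) dim_hyperplane[OF assms] by simp
  have fB: "finite B" using B(4) by (simp add: independent_imp_finite)
  obtain \<gamma> where \<gamma>: "bij_betw \<gamma> {2..CARD('n)} B"
    using finite_same_card_bij[of "{2..CARD('n)}" B] fB cB by auto
  have "tangent_onb v \<gamma>"
    unfolding tangent_onb_def
  proof safe
    fix i j assume i: "i \<in> {2..CARD('n)}" and j: "j \<in> {2..CARD('n)}"
    have gi: "\<gamma> i \<in> B" "\<gamma> j \<in> B" using \<gamma> i j by (auto simp: bij_betw_def)
    show "\<gamma> i \<bullet> \<gamma> j = (if i = j then 1 else 0)"
    proof (cases "i = j")
      case True then show ?thesis using B(3)[OF gi(1)] by (simp add: norm_eq_1)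
    next
      case False
      then have "\<gamma> i \<noteq> \<gamma> j" using \<gamma> i j by (auto simp: bij_betw_def inj_on_def)
      then show ?thesis using B(2) gi False by (auto simp: pairwise_def orthogonal_def)
    qed
  next
    fix i assume i: "i \<in> {2..CARD('n)}"
    have "\<gamma> i \<in> B" using \<gamma> i by (auto simp: bij_betw_def)
    then show "\<gamma> i \<bullet> v = 0" using B(1) by (auto simp: inner_commute)
  qed
  then show ?thesis by blast
qed

lemma det_tangent:
  fixes L :: "real^'n \<Rightarrow> real^'n" and nv :: "real^'n"
  assumes lin: "linear L" and nv: "norm nv = 1" and e: "tangent_onb nv e"
    and dim: "CARD('n) \<ge> 2"
    and perp: "\<And>i. i \<in> {2..CARD('n)} \<Longrightarrow> L (e i) \<bullet> nv = 0"
  shows "det (matrix L) = (L nv \<bullet> nv) * leib {2..CARD('n)} (\<lambda>i j. L (e i) \<bullet> e j)"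
proof -
  let ?d = "CARD('n)"
  define f where "f i = (if i = 1 then nv else e i)" for i
  obtain \<beta> where \<beta>: "bij_betw \<beta> (UNIV :: 'n set) {1..?d}"
    using finite_same_card_bij[of "UNIV :: 'n set" "{1..?d}"] by auto
  have on: "f i \<bullet> f j = (if i = j then 1 else 0)" if "i \<in> {1..?d}" "j \<in> {1..?d}" for i j
  proof -
    have nn: "nv \<bullet> nv = 1" using nv by (simp add: norm_eq_1)
    have ev: "e k \<bullet> nv = 0" "nv \<bullet> e k = 0" if "k \<in> {2..?d}" for k
      using e that by (auto simp: tangent_onb_def inner_commute)
    have ee: "e i \<bullet> e j = (if i = j then 1 else 0)" if "i \<in> {2..?d}" "j \<in> {2..?d}"
      using e that by (auto simp: tangent_onb_def)
    show ?thesis using that nn ev ee by (cases "i = 1"; cases "j = 1") (auto simp: f_def)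
  qed
  have "det (matrix L) = leib {1..?d} (\<lambda>i j. L (f i) \<bullet> f j)"
    by (rule det_onb[OF lin \<beta> on])
  also have "\<dots> = (L (f 1) \<bullet> f 1) * leib {2..?d} (\<lambda>i j. L (f i) \<bullet> f j)"
    by (rule leib_split) (use dim perp in \<open>auto simp: f_def\<close>)
  also have "leib {2..?d} (\<lambda>i j. L (f i) \<bullet> f j) = leib {2..?d} (\<lambda>i j. L (e i) \<bullet> e j)"
    by (rule leib_cong) (auto simp: f_def)
  finally show ?thesis by (simp add: f_def)
qed

definition nmapf :: "(real^'n \<Rightarrow> real^'n) \<Rightarrow> real^'n \<Rightarrow> real^'n" where
  "nmapf g = (\<lambda>y. inverse (norm (g y)) *\<^sub>R g y)"
definition Dnf :: "(real^'n \<Rightarrow> real^'n) \<Rightarrow> (real^'n \<Rightarrow> real^'n^'n) \<Rightarrow> real^'n \<Rightarrow> real^'n \<Rightarrow> real^'n" where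
  "Dnf g H x = (\<lambda>h. inverse (norm (g x)) *\<^sub>R (H x *v h) - ((g x \<bullet> (H x *v h)) / norm (g x) ^ 3) *\<^sub>R g x)"
definition DTf :: "(real^'n \<Rightarrow> real) \<Rightarrow> (real^'n \<Rightarrow> real^'n) \<Rightarrow> (real^'n \<Rightarrow> real^'n^'n) \<Rightarrow> real^'n \<Rightarrow> real^'n \<Rightarrow> real^'n" where
  "DTf \<phi> g H x = (\<lambda>h. (g x \<bullet> h) *\<^sub>R nmapf g x + \<phi> x *\<^sub>R Dnf g H x h)"

lemma linear_Dnf: "linear (Dnf g H x)"
  unfolding Dnf_def
  by (intro linearI) (simp_all add: matrix_vector_right_distrib inner_add_right algebra_simps
      add_divide_distrib scaleR_add_left matrix_vector_mult_scaleR inner_scaleR_right)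

lemma linear_DTf: "linear (DTf \<phi> g H x)"
proof -
  have l: "linear (Dnf g H x)" by (rule linear_Dnf)
  show ?thesis unfolding DTf_def
    by (intro linearI) (simp_all add: linear_add[OF l] linear_cmul[OF l] inner_add_right
        scaleR_add_left scaleR_add_right algebra_simps)
qed

lemma deriv_nmap:
  fixes g :: "real^'n \<Rightarrow> real^'n"
  assumes dg: "(g has_derivative (\<lambda>h. H x *v h)) (at x)" and gnz: "g x \<noteq> 0"
  shows "(nmapf g has_derivative Dnf g H x) (at x)"
proof -
  have dn: "((\<lambda>y. norm (g y)) has_derivative (\<lambda>h. (H x *v h) \<bullet> sgn (g x))) (at x)"
    using has_derivative_compose[OF dg has_derivative_norm[OF gnz]] by (simp add: o_def)
  have ng: "norm (g x) \<noteq> 0" using gnz by simp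
  have di: "((\<lambda>y. inverse (norm (g y))) has_derivative
      (\<lambda>h. - (inverse (norm (g x)) * ((H x *v h) \<bullet> sgn (g x)) * inverse (norm (g x))))) (at x)"
    by (rule Deriv.has_derivative_inverse[OF ng dn])
  have D: "(nmapf g has_derivative (\<lambda>h. inverse (norm (g x)) *\<^sub>R (H x *v h) +
      (- (inverse (norm (g x)) * ((H x *v h) \<bullet> sgn (g x)) * inverse (norm (g x)))) *\<^sub>R g x)) (at x)"
    unfolding nmapf_def by (rule has_derivative_scaleR[OF di dg])
  have "(\<lambda>h. inverse (norm (g x)) *\<^sub>R (H x *v h) +
      (- (inverse (norm (g x)) * ((H x *v h) \<bullet> sgn (g x)) * inverse (norm (g x)))) *\<^sub>R g x) = Dnf g H x"
  proof
    fix h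
    have "(H x *v h) \<bullet> sgn (g x) = (g x \<bullet> (H x *v h)) / norm (g x)"
      by (simp add: sgn_div_norm inner_commute divide_inverse mult.commute)
    then show "inverse (norm (g x)) *\<^sub>R (H x *v h) +
      (- (inverse (norm (g x)) * ((H x *v h) \<bullet> sgn (g x)) * inverse (norm (g x)))) *\<^sub>R g x = Dnf g H x h"
      unfolding Dnf_def using ng by (simp add: power3_eq_cube field_simps)
  qed
  with D show ?thesis by simp
qed

lemma deriv_T:
  fixes g :: "real^'n \<Rightarrow> real^'n" and \<phi> :: "real^'n \<Rightarrow> real"
  assumes U: "open U" "x \<in> U"
    and dphi: "(\<phi> has_derivative (\<lambda>h. g x \<bullet> h)) (at x)"
    and dg: "(g has_derivative (\<lambda>h. H x *v h)) (at x)" and gnz: "g x \<noteq> 0"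
    and Teq: "\<And>y. y \<in> U \<Longrightarrow> T y = \<phi> y *\<^sub>R nmapf g y"
  shows "(T has_derivative DTf \<phi> g H x) (at x)"
proof -
  have "((\<lambda>y. \<phi> y *\<^sub>R nmapf g y) has_derivative (\<lambda>h. \<phi> x *\<^sub>R Dnf g H x h + (g x \<bullet> h) *\<^sub>R nmapf g x)) (at x)"
    by (rule has_derivative_scaleR[OF dphi deriv_nmap[of g H x, OF dg gnz]])
  then have "((\<lambda>y. \<phi> y *\<^sub>R nmapf g y) has_derivative DTf \<phi> g H x) (at x)"
    unfolding DTf_def by (simp add: add.commute)
  then show ?thesis
    by (rule has_derivative_transform_within_open[OF _ U]) (simp add: Teq)
qed

lemma nmap_norm: "g x \<noteq> 0 \<Longrightarrow> norm (nmapf g x) = 1"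
  by (simp add: nmapf_def)

lemma Dnf_perp: "g x \<noteq> 0 \<Longrightarrow> Dnf g H x h \<bullet> nmapf g x = 0"
proof -
  assume g: "g x \<noteq> 0"
  have "g x \<bullet> Dnf g H x h = 0"
    unfolding Dnf_def using g
    by (simp add: inner_diff_right dot_square_norm power3_eq_cube power2_eq_square field_simps)
  then show ?thesis by (simp add: nmapf_def inner_commute)
qed

lemma DTf_n: "g x \<noteq> 0 \<Longrightarrow> DTf \<phi> g H x (nmapf g x) \<bullet> nmapf g x = norm (g x)"
  unfolding DTf_def
  by (simp add: inner_add_left Dnf_perp nmap_norm[unfolded norm_eq_1] )
     (simp add: nmapf_def field_simps dot_square_norm power2_eq_square)

lemma DTf_tangent_n: "g x \<noteq> 0 \<Longrightarrow> e \<bullet> nmapf g x = 0 \<Longrightarrow> DTf \<phi> g H x e \<bullet> nmapf g x = 0"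
  unfolding DTf_def
  by (simp add: inner_add_left Dnf_perp) (simp add: nmapf_def inner_commute)

lemma DTf_tangent: "e \<bullet> nmapf g x = 0 \<Longrightarrow> DTf \<phi> g H x e \<bullet> e' = \<phi> x * (Dnf g H x e \<bullet> e')"
  unfolding DTf_def
  by (simp add: inner_add_left) (auto simp: nmapf_def inner_commute)

lemma det_DT_formula:
  fixes g :: "real^'n \<Rightarrow> real^'n" and \<phi> :: "real^'n \<Rightarrow> real"
  assumes dim: "CARD('n) \<ge> 2" and gnz: "g x \<noteq> 0" and e: "tangent_onb (nmapf g x) e"
  shows "det (matrix (DTf \<phi> g H x)) =
    norm (g x) * \<phi> x ^ (CARD('n) - 1) * leib {2..CARD('n)} (\<lambda>i j. Dnf g H x (e i) \<bullet> e j)"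
proof -
  have en: "e i \<bullet> nmapf g x = 0" if "i \<in> {2..CARD('n)}" for i
    using e that by (simp add: tangent_onb_def)
  have "det (matrix (DTf \<phi> g H x)) = (DTf \<phi> g H x (nmapf g x) \<bullet> nmapf g x) *
      leib {2..CARD('n)} (\<lambda>i j. DTf \<phi> g H x (e i) \<bullet> e j)"
    by (rule det_tangent[OF linear_DTf nmap_norm[of g x, OF gnz] e dim]) (simp add: DTf_tangent_n[of g x, OF gnz] en)
  also have "leib {2..CARD('n)} (\<lambda>i j. DTf \<phi> g H x (e i) \<bullet> e j) =
      leib {2..CARD('n)} (\<lambda>i j. \<phi> x * (Dnf g H x (e i) \<bullet> e j))"
    by (rule leib_cong) (simp add: DTf_tangent en)
  also have "\<dots> = \<phi> x ^ (CARD('n) - 1) * leib {2..CARD('n)} (\<lambda>i j. Dnf g H x (e i) \<bullet> e j)"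
    by (subst leib_scale) auto
  finally show ?thesis using DTf_n[of g x \<phi> H, OF gnz] by simp
qed

lemma gauss_eq:
  fixes g :: "real^'n \<Rightarrow> real^'n" and \<phi> :: "real^'n \<Rightarrow> real"
  assumes dim: "CARD('n) \<ge> 2" and gnz: "g x \<noteq> 0" and phi: "\<phi> x \<noteq> 0"
    and dg: "(g has_derivative (\<lambda>h. H x *v h)) (at x)"
    and e: "tangent_onb (nmapf g x) e"
  shows "gauss_curvature (nmapf g) x = leib {2..CARD('n)} (\<lambda>i j. Dnf g H x (e i) \<bullet> e j)"
proof -
  have fd: "frechet_derivative (nmapf g) (at x) = Dnf g H x"
    using frechet_derivative_at[OF deriv_nmap[of g H x, OF dg gnz]] by simp
  have c: "norm (g x) * \<phi> x ^ (CARD('n) - 1) \<noteq> 0" using gnz phi by simp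
  have all: "leib {2..CARD('n)} (\<lambda>i j. Dnf g H x (e' i) \<bullet> e' j) = leib {2..CARD('n)} (\<lambda>i j. Dnf g H x (e i) \<bullet> e j)"
    if "tangent_onb (nmapf g x) e'" for e'
    using det_DT_formula[OF dim gnz that, of \<phi> H] det_DT_formula[OF dim gnz e, of \<phi> H] c phi dim by auto
  show ?thesis
    unfolding gauss_curvature_def fd
  proof (rule the_equality)
    show "\<forall>e'. tangent_onb (nmapf g x) e' \<longrightarrow>
        leib {2..CARD('n)} (\<lambda>i j. Dnf g H x (e i) \<bullet> e j) =
        (\<Sum>p | p permutes {2..CARD('n)}. of_int (sign p) * (\<Prod>i\<in>{2..CARD('n)}. Dnf g H x (e' i) \<bullet> e' (p i)))"
      using all by (simp add: leib_def)
    fix k assume "\<forall>e'. tangent_onb (nmapf g x) e' \<longrightarrow>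
        k = (\<Sum>p | p permutes {2..CARD('n)}. of_int (sign p) * (\<Prod>i\<in>{2..CARD('n)}. Dnf g H x (e' i) \<bullet> e' (p i)))"
    then show "k = leib {2..CARD('n)} (\<lambda>i j. Dnf g H x (e i) \<bullet> e j)"
      using e by (simp add: leib_def)
  qed
qed

lemma pointwise_det:
  fixes g :: "real^'n \<Rightarrow> real^'n" and \<phi> :: "real^'n \<Rightarrow> real"
  assumes dim: "CARD('n) \<ge> 2"
    and U: "open U" "x \<in> U"
    and dphi: "(\<phi> has_derivative (\<lambda>h. g x \<bullet> h)) (at x)"
    and dg: "(g has_derivative (\<lambda>h. H x *v h)) (at x)" and gnz: "g x \<noteq> 0"
    and Teq: "\<And>y. y \<in> U \<Longrightarrow> T y = \<phi> y *\<^sub>R nmapf g y"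
  shows "det (matrix (frechet_derivative T (at x))) = norm (g x) * \<phi> x ^ (CARD('n) - 1) * gauss_curvature (nmapf g) x"
proof -
  have fT: "frechet_derivative T (at x) = DTf \<phi> g H x"
    using frechet_derivative_at[OF deriv_T[where U=U and x=x and \<phi>=\<phi> and g=g and H=H and T=T, OF U dphi dg gnz Teq]] by simp
  have "nmapf g x \<noteq> 0" using nmap_norm[of g x, OF gnz] by auto
  then obtain e where e: "tangent_onb (nmapf g x) e" using exists_tangent_onb by blast
  show ?thesis
  proof (cases "\<phi> x = 0")
    case True
    then show ?thesis using det_DT_formula[OF dim gnz e, of \<phi> H] dim fT by simp
  next
    case False
    then show ?thesis using det_DT_formula[OF dim gnz e, of \<phi> H] gauss_eq[where g=g and x=x and \<phi>=\<phi> and H=H and e=e, OF dim gnz False dg e] fT by simp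
  qed
qed

lemma curve_deriv:
  fixes \<phi> :: "'a::real_inner \<Rightarrow> real" and c :: "real \<Rightarrow> 'a"
  assumes dphi: "(\<phi> has_derivative (\<lambda>h. gg \<bullet> h)) (at (c t))"
    and dc: "(c has_vector_derivative c') (at t)"
  shows "((\<lambda>s. \<phi> (c s)) has_real_derivative (gg \<bullet> c')) (at t)"
proof -
  have "(c has_derivative (\<lambda>h. h *\<^sub>R c')) (at t)" using dc by (simp add: has_vector_derivative_def)
  from has_derivative_compose[OF this dphi]
  have "((\<lambda>s. \<phi> (c s)) has_derivative (\<lambda>h. gg \<bullet> (h *\<^sub>R c'))) (at t)" .
  then show ?thesis by (rule has_derivative_imp_has_field_derivative) simp
qed

lemma qc_first:
  fixes \<phi> :: "real^'n \<Rightarrow> real"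
  assumes x: "x \<in> interior A" and y: "y \<in> A" and le: "\<phi> y \<le> \<phi> x"
    and conv: "convex {z \<in> A. \<phi> z \<le> \<phi> x}"
    and dphi: "(\<phi> has_derivative (\<lambda>h. g x \<bullet> h)) (at x)"
  shows "g x \<bullet> (y - x) \<le> 0"
proof (rule ccontr)
  assume "\<not> g x \<bullet> (y - x) \<le> 0"
  then have pos: "g x \<bullet> (y - x) > 0" by simp
  have dl: "((\<lambda>t. x + t *\<^sub>R (y - x)) has_vector_derivative (y - x)) (at 0)"
    by (auto intro!: derivative_eq_intros)
  have D: "((\<lambda>t. \<phi> (x + t *\<^sub>R (y - x))) has_real_derivative (g x \<bullet> (y - x))) (at 0)"
    by (rule curve_deriv[OF _ dl]) (simp add: dphi)
  obtain d where d: "d > 0" "\<And>h. h > 0 \<Longrightarrow> h < d \<Longrightarrow> \<phi> (x + 0 *\<^sub>R (y - x)) < \<phi> (x + (0 + h) *\<^sub>R (y - x))"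
    using DERIV_pos_inc_right[OF D pos] by blast
  define h where "h = min (d/2) (1/2)"
  have h: "0 < h" "h < d" "h \<le> 1" using d by (auto simp: h_def)
  have xA: "x \<in> A" using x interior_subset by blast
  have "(1 - h) *\<^sub>R x + h *\<^sub>R y \<in> {z \<in> A. \<phi> z \<le> \<phi> x}"
    using conv xA y le h by (intro convexD) auto
  moreover have "(1 - h) *\<^sub>R x + h *\<^sub>R y = x + h *\<^sub>R (y - x)" by (simp add: algebra_simps)
  ultimately have "\<phi> (x + h *\<^sub>R (y - x)) \<le> \<phi> x" by simp
  with d(2)[OF h(1) h(2)] show False by simp
qed

lemma qc_second:
  fixes \<phi> :: "real^'n \<Rightarrow> real" and g :: "real^'n \<Rightarrow> real^'n"
  assumes x: "x \<in> interior A"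
    and conv: "convex {z \<in> A. \<phi> z \<le> \<phi> x}"
    and dphi: "\<And>y. y \<in> interior A \<Longrightarrow> (\<phi> has_derivative (\<lambda>h. g y \<bullet> h)) (at y)"
    and dg: "(g has_derivative (\<lambda>h. H x *v h)) (at x)"
    and gnz: "g x \<noteq> 0" and perp: "g x \<bullet> v = 0"
  shows "v \<bullet> (H x *v v) \<ge> 0"
proof (rule ccontr)
  define q where "q = v \<bullet> (H x *v v)"
  assume "\<not> v \<bullet> (H x *v v) \<ge> 0"
  then have q: "q < 0" by (simp add: q_def)
  have gg: "g x \<bullet> g x > 0" using gnz by simp
  define s where "s = - q / (4 * (g x \<bullet> g x))"
  have s: "s > 0" using q gg unfolding s_def by (intro divide_pos_pos) auto
  define w where "w = s *\<^sub>R g x"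
  define c where "c t = x + t *\<^sub>R v + (t^2) *\<^sub>R w" for t :: real
  have c0: "c 0 = x" by (simp add: c_def)
  have dc: "(c has_vector_derivative (v + (2*t) *\<^sub>R w)) (at t)" for t
    unfolding c_def by (auto intro!: derivative_eq_intros simp: algebra_simps)
  have contc: "continuous_on UNIV c" unfolding c_def by (intro continuous_intros)
  have "open (c -` interior A)" by (rule open_vimage[OF open_interior contc])
  moreover have "0 \<in> c -` interior A" using x c0 by simp
  ultimately obtain \<delta> where \<delta>: "\<delta> > 0" "\<And>t. dist t 0 < \<delta> \<Longrightarrow> c t \<in> interior A"
    by (metis open_dist vimageE)
  define f' where "f' t = g (c t) \<bullet> (v + (2*t) *\<^sub>R w)" for t
  have df: "((\<lambda>s. \<phi> (c s)) has_real_derivative f' t) (at t)" if "dist t 0 < \<delta>" for t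
    unfolding f'_def by (rule curve_deriv[OF dphi[OF \<delta>(2)[OF that]] dc])
  have dgc: "((\<lambda>t. g (c t)) has_derivative (\<lambda>h. H x *v (h *\<^sub>R (v + (2*0) *\<^sub>R w)))) (at 0)"
    using has_derivative_compose[OF dc[of 0, unfolded has_vector_derivative_def]] dg c0 by simp
  have du: "((\<lambda>t. v + (2*t) *\<^sub>R w) has_derivative (\<lambda>h. (2*h) *\<^sub>R w)) (at 0)"
    by (auto intro!: derivative_eq_intros simp: algebra_simps)
  have dk0: "(f' has_derivative (\<lambda>h. g (c 0) \<bullet> ((2*h) *\<^sub>R w) + (H x *v (h *\<^sub>R (v + (2*0) *\<^sub>R w))) \<bullet> (v + (2*0) *\<^sub>R w))) (at 0)"
    unfolding f'_def by (rule has_derivative_inner[OF dgc du])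
  have "(f' has_real_derivative (q/2)) (at 0)"
  proof (rule has_derivative_imp_has_field_derivative[OF dk0])
    fix h :: real
    have "g x \<bullet> ((2*h) *\<^sub>R w) = h * (2 * s * (g x \<bullet> g x))" by (simp add: w_def)
    also have "2 * s * (g x \<bullet> g x) = - q / 2" using gg by (simp add: s_def field_simps)
    finally have A1: "g x \<bullet> ((2*h) *\<^sub>R w) = h * (- q / 2)" .
    have A2: "(H x *v (h *\<^sub>R v)) \<bullet> v = h * q"
      by (simp add: q_def matrix_vector_mult_scaleR inner_commute)
    show "h * (q / 2) = g (c 0) \<bullet> ((2*h) *\<^sub>R w) + (H x *v (h *\<^sub>R (v + (2*0) *\<^sub>R w))) \<bullet> (v + (2*0) *\<^sub>R w)"
      using A1 A2 c0 by (simp add: algebra_simps) metis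
  qed
  moreover have "q / 2 < 0" using q by simp
  ultimately obtain d where d: "d > 0" "\<And>h. h > 0 \<Longrightarrow> h < d \<Longrightarrow> f' 0 > f' (0 + h)"
    using DERIV_neg_dec_right by blast
  have f'0: "f' 0 = 0" using perp c0 by (simp add: f'_def)
  define t0 where "t0 = min d \<delta> / 2"
  have t0: "t0 > 0" "t0 < d" "t0 < \<delta>" using d \<delta> by (auto simp: t0_def)
  have "\<exists>z. 0 < z \<and> z < t0 \<and> \<phi> (c t0) - \<phi> (c 0) = (t0 - 0) * f' z"
    by (rule MVT2[OF t0(1)]) (rule df, use t0 in auto)
  then obtain z where z: "0 < z" "z < t0" "\<phi> (c t0) - \<phi> (c 0) = t0 * f' z" by auto
  have "f' z < 0" using d(2)[of z] z t0 f'0 by simp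
  then have "t0 * f' z < 0" using t0(1) by (simp add: mult_pos_neg)
  then have "\<phi> (c t0) < \<phi> x" using z c0 by simp
  moreover have cA: "c t0 \<in> A" using \<delta>(2)[of t0] t0 interior_subset by auto
  ultimately have "g x \<bullet> (c t0 - x) \<le> 0"
    using qc_first[where g=g and \<phi>=\<phi> and x=x and A=A and y="c t0", OF x cA _ conv dphi[OF x]] by simp
  moreover have "g x \<bullet> (c t0 - x) = t0^2 * s * (g x \<bullet> g x)"
    using perp by (simp add: c_def w_def inner_add_right)
  moreover have "t0^2 * s * (g x \<bullet> g x) > 0" using t0 s gg by simp
  ultimately show False by simp
qed

lemma cont_det_affine:
  fixes P Q :: "real^'n \<Rightarrow> real^'n"
  shows "continuous_on S (\<lambda>t. det (matrix (\<lambda>h. P h + t *\<^sub>R Q h)))"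
  unfolding det_def matrix_def by (simp, intro continuous_intros)

lemma det_path:
  fixes F :: "real \<Rightarrow> real^'n \<Rightarrow> real^'n"
  assumes cont: "continuous_on {0..1} (\<lambda>t. det (matrix (F t)))"
    and nz: "\<And>t. t \<in> {0..<1} \<Longrightarrow> det (matrix (F t)) \<noteq> 0"
    and pos0: "det (matrix (F 0)) > 0"
  shows "det (matrix (F 1)) \<ge> 0"
proof (rule ccontr)
  assume "\<not> det (matrix (F 1)) \<ge> 0"
  then have neg: "det (matrix (F 1)) \<le> 0" "det (matrix (F 1)) \<noteq> 0" by auto
  obtain t where t: "0 \<le> t" "t \<le> 1" "det (matrix (F t)) = 0"
    using IVT2'[of "\<lambda>t. det (matrix (F t))" 1 0 0] neg pos0 cont by auto
  then have "t \<noteq> 1" using neg by auto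
  with t nz[of t] show False by auto
qed

lemma DTf_det_nonneg:
  fixes \<phi> :: "real^'n \<Rightarrow> real" and g :: "real^'n \<Rightarrow> real^'n"
  assumes gnz: "g x \<noteq> 0" and phi: "\<phi> x \<ge> 0"
    and psd: "\<And>v. g x \<bullet> v = 0 \<Longrightarrow> v \<bullet> (H x *v v) \<ge> 0"
  shows "det (matrix (DTf \<phi> g H x)) \<ge> 0"
proof -
  define n where "n = nmapf g x"
  define a where "a = norm (g x)"
  have a: "a > 0" using gnz by (simp add: a_def)
  have nn: "n \<bullet> n = 1" using nmap_norm[of g x, OF gnz] by (simp add: n_def norm_eq_1)
  have gn: "g x = a *\<^sub>R n" using gnz by (simp add: n_def a_def nmapf_def)
  have gh: "g x \<bullet> h = a * (n \<bullet> h)" for h by (simp add: gn)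
  have Dnn: "Dnf g H x h \<bullet> n = 0" for h using Dnf_perp[of g x H h, OF gnz] by (simp add: n_def)
  have Dnh: "Dnf g H x h \<bullet> h \<ge> 0" if "n \<bullet> h = 0" for h
  proof -
    have g0: "g x \<bullet> h = 0" using that gh by simp
    have "Dnf g H x h \<bullet> h = (h \<bullet> (H x *v h)) / a"
    proof -
      have "Dnf g H x h \<bullet> h = inverse a * ((H x *v h) \<bullet> h) - ((g x \<bullet> (H x *v h)) / a ^ 3) * (g x \<bullet> h)"
        unfolding Dnf_def a_def by (simp only: inner_diff_left inner_scaleR_left)
      then show ?thesis using g0 by (simp add: inner_commute divide_inverse mult.commute)
    qed
    then show ?thesis using psd[OF g0] a by simp
  qed
  define Q where "Q h = ((a - 1) * (n \<bullet> h)) *\<^sub>R n" for h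
  define FA where "FA t = (\<lambda>h. h + t *\<^sub>R Q h)" for t :: real
  have linQ: "linear Q" unfolding Q_def
    by (intro linearI) (simp_all add: inner_add_right algebra_simps scaleR_add_left)
  have linFA: "linear (FA t)" for t
    unfolding FA_def using linQ by (intro linearI) (simp_all add: linear_add linear_cmul algebra_simps)
  have injFA: "det (matrix (FA t)) \<noteq> 0" if "t \<in> {0..1}" for t
  proof -
    have "h = 0" if h: "FA t h = 0" for h
    proof -
      have "FA t h \<bullet> n = (1 + t * (a - 1)) * (n \<bullet> h)"
        by (simp add: FA_def Q_def inner_add_left nn inner_commute algebra_simps)
      moreover have "1 + t * (a - 1) > 0"
      proof -
        have "1 + t * (a - 1) = (1 - t) * 1 + t * a" by (simp add: algebra_simps)
        moreover have "(1 - t) * 1 + t * a > 0"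
          using \<open>t \<in> {0..1}\<close> a by (cases "t = 0") (auto intro: add_nonneg_pos add_pos_nonneg)
        ultimately show ?thesis by simp
      qed
      ultimately have "n \<bullet> h = 0" using h by simp
      then show "h = 0" using h by (simp add: FA_def Q_def)
    qed
    then show ?thesis using det_nz_iff_inj[OF linFA] linear_injective_0[OF linFA] by blast
  qed
  have FA0: "FA 0 = id" by (simp add: FA_def fun_eq_iff)
  have posA: "det (matrix (FA 1)) > 0"
  proof -
    have "det (matrix (FA 1)) \<ge> 0"
      by (rule det_path) (use injFA FA0 in \<open>auto simp: FA_def intro: cont_det_affine\<close>)
    then show ?thesis using injFA[of 1] by simp
  qed
  define R where "R h = \<phi> x *\<^sub>R Dnf g H x h - (h - (n \<bullet> h) *\<^sub>R n)" for h
  define FB where "FB t = (\<lambda>h. FA 1 h + t *\<^sub>R R h)" for t :: real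
  have linD: "linear (Dnf g H x)" by (rule linear_Dnf)
  have linR: "linear R" unfolding R_def using linD
    by (intro linearI) (simp_all add: linear_add linear_cmul inner_add_right algebra_simps scaleR_add_left)
  have linFB: "linear (FB t)" for t
    unfolding FB_def using linR linFA[of 1] by (intro linearI) (simp_all add: linear_add linear_cmul algebra_simps)
  have FA1: "FA 1 h = (g x \<bullet> h) *\<^sub>R n + (h - (n \<bullet> h) *\<^sub>R n)" for h
    by (simp add: FA_def Q_def gh algebra_simps)
  have nzB: "det (matrix (FB t)) \<noteq> 0" if t01: "t \<in> {0..<1}" for t
  proof -
    have "h = 0" if h: "FB t h = 0" for h
    proof -
      have "FB t h \<bullet> n = (g x \<bullet> h) * (n \<bullet> n) + (h \<bullet> n - (n \<bullet> h) * (n \<bullet> n)) +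
          t * (\<phi> x * (Dnf g H x h \<bullet> n) - (h \<bullet> n - (n \<bullet> h) * (n \<bullet> n)))"
        by (simp only: FB_def FA1 R_def inner_add_left inner_diff_left inner_scaleR_left)
      then have "FB t h \<bullet> n = g x \<bullet> h" by (simp add: nn Dnn inner_commute[of h n])
      then have "g x \<bullet> h = 0" using h by simp
      then have nh: "n \<bullet> h = 0" using gh a by simp
      then have "FB t h = (1 - t) *\<^sub>R h + (t * \<phi> x) *\<^sub>R Dnf g H x h"
        by (simp add: FB_def FA1 R_def gh algebra_simps)
      then have "0 = (1 - t) * (h \<bullet> h) + (t * \<phi> x) * (Dnf g H x h \<bullet> h)"
        using h by (metis inner_add_left inner_scaleR_left inner_zero_left)
      moreover have "(t * \<phi> x) * (Dnf g H x h \<bullet> h) \<ge> 0"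
        using t01 phi Dnh[OF nh] by simp
      ultimately have "(1 - t) * (h \<bullet> h) \<le> 0" by linarith
      moreover have "1 - t > 0" using t01 by simp
      ultimately have "h \<bullet> h \<le> 0" by (simp add: mult_le_0_iff)
      then show "h = 0" using inner_ge_zero[of h] by (metis antisym inner_eq_zero_iff)
    qed
    then show ?thesis using det_nz_iff_inj[OF linFB] linear_injective_0[OF linFB] by blast
  qed
  have "det (matrix (FB 1)) \<ge> 0"
    by (rule det_path) (use nzB posA in \<open>auto simp: FB_def intro: cont_det_affine\<close>)
  moreover have "FB 1 = DTf \<phi> g H x"
    by (simp add: fun_eq_iff FB_def FA1 R_def DTf_def n_def)
  ultimately show ?thesis by simp
qed

lemma cov_nn_wo:
  fixes g :: "real^'m::{finite,wellorder} \<Rightarrow> real^'m::{finite,wellorder}" and f :: "real^'m::{finite,wellorder} \<Rightarrow> real"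
  assumes S: "S \<in> sets lebesgue" and der: "\<And>x. x \<in> S \<Longrightarrow> (g has_derivative g' x) (at x within S)"
    and inj: "inj_on g S" and f0: "\<And>y. f y \<ge> 0" and fi: "integrable lebesgue f"
  shows "(\<integral>\<^sup>+y. ennreal (f y) * indicator (g ` S) y \<partial>lebesgue) =
         (\<integral>\<^sup>+x. ennreal (\<bar>det (matrix (g' x))\<bar> * f (g x)) * indicator S x \<partial>lebesgue)"
proof -
  let ?J = "\<lambda>x. \<bar>det (matrix (g' x))\<bar>"
  define c :: "real^1" where "c = axis 1 1"
  have cc: "c \<bullet> c = 1" by (simp add: c_def inner_axis_axis)
  define F where "F y = f y *\<^sub>R c" for y
  have gd: "g differentiable_on S"
    using der by (auto simp: differentiable_on_def differentiable_def)
  have gS: "g ` S \<in> sets lebesgue"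
    by (rule differentiable_image_in_sets_lebesgue[OF S _ gd]) simp
  have fgS: "f absolutely_integrable_on (g ` S)"
    unfolding set_integrable_def by (rule integrable_mult_indicator[OF gS fi])
  have FgS: "F absolutely_integrable_on (g ` S)"
    unfolding F_def by (rule absolutely_integrable_scaleR_right[OF fgS])
  have cov: "(\<lambda>x. ?J x *\<^sub>R F (g x)) absolutely_integrable_on S \<and>
      integral S (\<lambda>x. ?J x *\<^sub>R F (g x)) = integral (g ` S) F"
    using has_absolute_integral_change_of_variables[OF S der inj, of F "integral (g ` S) F"] FgS by simp
  have eq1: "(\<lambda>x. (?J x *\<^sub>R F (g x)) \<bullet> c) = (\<lambda>x. ?J x * f (g x))"
    by (simp add: F_def cc)
  have eq2: "(\<lambda>y. F y \<bullet> c) = f" by (simp add: F_def cc fun_eq_iff)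
  have ai: "(\<lambda>x. ?J x * f (g x)) absolutely_integrable_on S"
    using absolutely_integrable_component[OF cov[THEN conjunct1], of c] eq1 by simp
  have int1: "((\<lambda>x. ?J x * f (g x)) has_integral integral S (\<lambda>x. ?J x * f (g x))) S"
    using set_lebesgue_integral_eq_integral(1)[OF ai] by (simp add: integrable_integral)
  have int2: "(f has_integral integral (g ` S) f) (g ` S)"
    using set_lebesgue_integral_eq_integral(1)[OF fgS] by (simp add: integrable_integral)
  have Fi: "F integrable_on g ` S" using set_lebesgue_integral_eq_integral(1)[OF FgS] .
  have Ji: "(\<lambda>x. ?J x *\<^sub>R F (g x)) integrable_on S"
    using set_lebesgue_integral_eq_integral(1)[OF cov[THEN conjunct1]] .
  have "integral S (\<lambda>x. ?J x * f (g x)) = integral S (\<lambda>x. (?J x *\<^sub>R F (g x)) \<bullet> c)"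
    unfolding eq1 ..
  also have "\<dots> = integral S (\<lambda>x. ?J x *\<^sub>R F (g x)) \<bullet> c"
    by (rule integral_component_eq[OF Ji])
  also have "\<dots> = integral (g ` S) F \<bullet> c" using cov by simp
  also have "\<dots> = integral (g ` S) (\<lambda>y. F y \<bullet> c)"
    by (rule integral_component_eq[OF Fi, symmetric])
  also have "\<dots> = integral (g ` S) f" by (simp add: eq2)
  finally have ieq: "integral S (\<lambda>x. ?J x * f (g x)) = integral (g ` S) f" .
  have "(\<integral>\<^sup>+y. ennreal (f y) * indicator (g ` S) y \<partial>lborel) = ennreal (integral (g ` S) f)"
    by (rule nn_integral_has_integral_lebesgue'[OF f0 int2])
  moreover have "(\<integral>\<^sup>+x. ennreal (?J x * f (g x)) * indicator S x \<partial>lborel) = ennreal (integral S (\<lambda>x. ?J x * f (g x)))"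
    by (rule nn_integral_has_integral_lebesgue'[OF _ int1]) (simp add: f0)
  ultimately show ?thesis using ieq by (simp add: nn_integral_completion)
qed

lemma lebesgue_transfer:
  fixes T :: "'a::euclidean_space \<Rightarrow> 'b::euclidean_space"
  assumes Tm: "T \<in> borel_measurable borel" and D: "distr lborel borel T = lborel"
  shows "T \<in> lebesgue \<rightarrow>\<^sub>M lebesgue" "distr lebesgue lebesgue T = lebesgue"
proof -
  have m0: "T \<in> (lborel :: 'a measure) \<rightarrow>\<^sub>M lborel" using Tm by simp
  have m: "T \<in> (lebesgue :: 'a measure) \<rightarrow>\<^sub>M lborel"
    by (rule measurable_completion[OF m0])
  have "distr lebesgue lborel T = distr lborel lborel T"
    by (rule distr_completion[OF m0])
  also have "\<dots> = distr lborel borel T" by (rule distr_cong) auto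
  finally have DL: "distr lebesgue lborel T = lborel" using D by simp
  show "T \<in> lebesgue \<rightarrow>\<^sub>M lebesgue"
    by (rule completion.measurable_completion2[OF m]) (simp add: DL)
  have "completion (distr lebesgue lborel T) = distr lebesgue (completion lborel) T"
    by (rule completion.completion_distr_eq[OF m]) (simp add: DL)
  then show "distr lebesgue lebesgue T = lebesgue" by (simp add: DL)
qed

lemma lborel_Qw: "distr lborel borel (Qw :: real^('n wo) \<Rightarrow> real^'n) = lborel"
proof -
  have "distr lborel borel (Qw :: real^('n wo) \<Rightarrow> real^'n) =
        distr (distr lborel borel (Pw :: real^'n \<Rightarrow> _)) borel Qw" by (simp add: lborel_Pw)
  also have "\<dots> = distr lborel borel (Qw \<circ> (Pw :: real^'n \<Rightarrow> _))"
    by (rule distr_distr) simp_all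
  also have "Qw \<circ> (Pw :: real^'n \<Rightarrow> _) = id" by (simp add: fun_eq_iff)
  finally show ?thesis by (simp add: distr_id2)
qed

lemmas Pw_leb = lebesgue_transfer[OF Pw_meas lborel_Pw]
lemmas Qw_leb = lebesgue_transfer[OF Qw_meas lborel_Qw]

lemma nn_integral_Pw':
  assumes "h \<in> borel_measurable (lebesgue :: (real^'n wo) measure)"
  shows "(\<integral>\<^sup>+y. h y \<partial>lebesgue) = (\<integral>\<^sup>+x. h (Pw (x::real^'n)) \<partial>lebesgue)"
proof -
  have "(\<integral>\<^sup>+y. h y \<partial>lebesgue) = (\<integral>\<^sup>+y. h y \<partial>distr lebesgue lebesgue (Pw :: real^'n \<Rightarrow> _))"
    by (simp add: Pw_leb(2))
  also have "\<dots> = (\<integral>\<^sup>+x. h (Pw (x::real^'n)) \<partial>lebesgue)"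
  proof (rule nn_integral_distr[OF Pw_leb(1)])
    show "h \<in> borel_measurable (distr lebesgue lebesgue (Pw :: real^'n \<Rightarrow> _))"
      using assms measurable_cong_sets[OF sets_distr refl] by blast
  qed
  finally show ?thesis .
qed

lemma Qw_axis: "Qw (axis (j :: ('n::finite) wo) (1::real)) = axis (Rep_wo j) (1::real)"
  by (auto simp: vec_eq_iff axis_def Abs_wo_inverse Rep_wo_inverse)

lemma det_conj:
  fixes L :: "real^'n \<Rightarrow> real^'n"
  assumes lin: "linear L"
  shows "det (matrix (Pw \<circ> L \<circ> Qw)) = det (matrix L)"
proof -
  have e: "matrix (Pw \<circ> L \<circ> Qw) $ i $ j = matrix L $ Rep_wo i $ Rep_wo j" for i j
    by (simp add: matrix_def Qw_axis)
  have bij: "bij_betw Rep_wo (UNIV :: 'n wo set) (UNIV :: 'n set)"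
    by (metis Abs_wo_inverse Rep_wo_inverse UNIV_I bij_betw_byWitness subsetI)
  have "det (matrix L) = leib UNIV (\<lambda>i j. matrix L $ i $ j)" by (rule det_leib)
  also have "\<dots> = leib UNIV (\<lambda>i j. matrix L $ Rep_wo i $ Rep_wo j)"
    by (rule leib_reindex[OF bij]) simp
  also have "\<dots> = det (matrix (Pw \<circ> L \<circ> Qw))" by (simp add: det_leib e)
  finally show ?thesis by simp
qed

lemma bl_Pw: "bounded_linear Pw" using linear_Pw linear_conv_bounded_linear by blast
lemma bl_Qw: "bounded_linear Qw" using linear_Qw linear_conv_bounded_linear by blast

lemma cov_nn:
  fixes g :: "real^'n \<Rightarrow> real^'n" and f :: "real^'n \<Rightarrow> real"
  assumes S: "S \<in> sets lebesgue" and der: "\<And>x. x \<in> S \<Longrightarrow> (g has_derivative g' x) (at x within S)"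
    and inj: "inj_on g S" and f0: "\<And>y. f y \<ge> 0" and fi: "integrable lebesgue f"
    and fb: "f \<in> borel_measurable borel"
  shows "(\<integral>\<^sup>+y. ennreal (f y) * indicator (g ` S) y \<partial>lebesgue) =
         (\<integral>\<^sup>+x. ennreal (\<bar>det (matrix (g' x))\<bar> * f (g x)) * indicator S x \<partial>lebesgue)"
proof -
  define St where "St = Qw -` S"
  define gt where "gt = Pw \<circ> g \<circ> Qw"
  define gt' where "gt' y = Pw \<circ> g' (Qw y) \<circ> Qw" for y
  define ft where "ft = f \<circ> Qw"
  have QSt: "Qw ` St = S"
  proof
    show "Qw ` St \<subseteq> S" by (auto simp: St_def)
    show "S \<subseteq> Qw ` St"
    proof
      fix y assume "y \<in> S"
      then have "Pw y \<in> St" by (simp add: St_def)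
      then have "Qw (Pw y) \<in> Qw ` St" by (rule imageI)
      then show "y \<in> Qw ` St" by simp
    qed
  qed
  have St: "St \<in> sets lebesgue"
    using measurable_sets[OF Qw_leb(1) S] by (simp add: St_def)
  have dert: "(gt has_derivative gt' y) (at y within St)" if y: "y \<in> St" for y
  proof -
    have dQ: "(Qw has_derivative Qw) (at y within St)" by (rule bounded_linear_imp_has_derivative[OF bl_Qw])
    have dg: "(g has_derivative g' (Qw y)) (at (Qw y) within Qw ` St)"
      using der[of "Qw y"] y QSt by (simp add: St_def)
    have "((\<lambda>x. g (Qw x)) has_derivative (\<lambda>x. g' (Qw y) (Qw x))) (at y within St)"
      by (rule has_derivative_in_compose[OF dQ dg])
    from bounded_linear.has_derivative[OF bl_Pw this]
    show ?thesis by (simp add: gt_def gt'_def o_def)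
  qed
  have injt: "inj_on gt St"
  proof (rule inj_onI)
    fix a b assume a: "a \<in> St" and b: "b \<in> St" and e: "gt a = gt b"
    then have "Qw (Pw (g (Qw a))) = Qw (Pw (g (Qw b)))" by (simp add: gt_def)
    then have "g (Qw a) = g (Qw b)" by simp
    then have "Qw a = Qw b" using inj a b by (auto simp: St_def inj_on_def)
    then have "Pw (Qw a) = Pw (Qw b)" by simp
    then show "a = b" by simp
  qed
  have ftb: "ft \<in> borel_measurable borel" unfolding ft_def using fb Qw_meas by simp
  have ftm: "ft \<in> borel_measurable lebesgue" using ftb by (simp add: measurable_completion)
  have fti: "integrable lebesgue ft"
  proof -
    have "integrable (distr lebesgue lebesgue (Pw :: real^'n \<Rightarrow> _)) ft \<longleftrightarrow> integrable lebesgue (\<lambda>x. ft (Pw (x::real^'n)))"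
      by (rule integrable_distr_eq[OF Pw_leb(1) ftm])
    moreover have "(\<lambda>x. ft (Pw (x::real^'n))) = f" by (simp add: ft_def fun_eq_iff)
    ultimately show ?thesis using fi by (simp add: Pw_leb(2))
  qed
  have ft0: "\<And>y. ft y \<ge> 0" unfolding ft_def using f0 by simp
  have wo: "(\<integral>\<^sup>+y. ennreal (ft y) * indicator (gt ` St) y \<partial>lebesgue) =
         (\<integral>\<^sup>+y. ennreal (\<bar>det (matrix (gt' y))\<bar> * ft (gt y)) * indicator St y \<partial>lebesgue)"
    by (rule cov_nn_wo[OF St dert injt ft0 fti])
  have gtd: "gt differentiable_on St"
    using dert by (auto simp: differentiable_on_def differentiable_def)
  have gtS: "gt ` St \<in> sets lebesgue"
    by (rule differentiable_image_in_sets_lebesgue[OF St _ gtd]) simp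
  have m1: "(\<lambda>y. ennreal (ft y) * indicator (gt ` St) y) \<in> borel_measurable lebesgue"
    using ftm gtS by measurable
  have "(\<integral>\<^sup>+y. ennreal (ft y) * indicator (gt ` St) y \<partial>lebesgue) =
        (\<integral>\<^sup>+x. ennreal (ft (Pw x)) * indicator (gt ` St) (Pw (x::real^'n)) \<partial>lebesgue)"
    by (rule nn_integral_Pw'[OF m1])
  also have "\<dots> = (\<integral>\<^sup>+x. ennreal (f x) * indicator (g ` S) x \<partial>lebesgue)"
  proof -
    have iff: "Pw x \<in> gt ` St \<longleftrightarrow> x \<in> g ` S" for x
    proof
      assume "Pw x \<in> gt ` St"
      then obtain y where "y \<in> St" "Pw x = Pw (g (Qw y))" by (auto simp: gt_def)
      then have "Qw (Pw x) = Qw (Pw (g (Qw y)))" "Qw y \<in> S" by (simp_all add: St_def)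
      then have "x = g (Qw y)" "Qw y \<in> S" by simp_all
      then show "x \<in> g ` S" by blast
    next
      assume "x \<in> g ` S"
      then obtain z where "z \<in> S" "x = g z" by blast
      then have "Pw z \<in> St" "Pw x = gt (Pw z)" by (simp_all add: St_def gt_def)
      then show "Pw x \<in> gt ` St" by (rule rev_image_eqI)
    qed
    show ?thesis
    proof (rule nn_integral_cong)
      fix x :: "real^'n"
      have "indicator (gt ` St) (Pw x) = (indicator (g ` S) x :: ennreal)"
        unfolding indicator_def using iff[of x] by simp
      then show "ennreal (ft (Pw x)) * indicator (gt ` St) (Pw x) = ennreal (f x) * indicator (g ` S) x"
        by (simp add: ft_def)
    qed
  qed
  finally have L: "(\<integral>\<^sup>+y. ennreal (ft y) * indicator (gt ` St) y \<partial>lebesgue) =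
      (\<integral>\<^sup>+x. ennreal (f x) * indicator (g ` S) x \<partial>lebesgue)" .
  define u where "u y = \<bar>det (matrix (gt' y))\<bar> * ft (gt y)" for y
  have um: "u \<in> borel_measurable (lebesgue_on St)"
  proof -
    have "(\<lambda>y. det (matrix (gt' y))) \<in> borel_measurable (lebesgue_on St)"
      by (rule borel_measurable_det_Jacobian[OF St dert])
    moreover have "(\<lambda>y. ft (gt y)) \<in> borel_measurable (lebesgue_on St)"
    proof -
      have "gt \<in> borel_measurable (lebesgue_on St)"
        by (rule continuous_imp_measurable_on_sets_lebesgue[OF differentiable_imp_continuous_on[OF gtd] St])
      then show ?thesis using ftb by (simp add: measurable_compose[of gt _ borel ft])
    qed
    ultimately show ?thesis unfolding u_def by measurable
  qed
  have m2: "(\<lambda>y. ennreal (u y) * indicator St y) \<in> borel_measurable lebesgue"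
  proof -
    have "(\<lambda>y. if y \<in> St then u y else 0) \<in> borel_measurable lebesgue"
      using borel_measurable_if[OF St] um by blast
    then have "(\<lambda>y. ennreal (if y \<in> St then u y else 0)) \<in> borel_measurable lebesgue" by measurable
    moreover have "(\<lambda>y. ennreal (if y \<in> St then u y else 0)) = (\<lambda>y. ennreal (u y) * indicator St y)"
      by (auto simp: fun_eq_iff indicator_def)
    ultimately show ?thesis by simp
  qed
  have "(\<integral>\<^sup>+y. ennreal (u y) * indicator St y \<partial>lebesgue) =
        (\<integral>\<^sup>+x. ennreal (u (Pw x)) * indicator St (Pw (x::real^'n)) \<partial>lebesgue)"
    by (rule nn_integral_Pw'[OF m2])
  also have "\<dots> = (\<integral>\<^sup>+x. ennreal (\<bar>det (matrix (g' x))\<bar> * f (g x)) * indicator S x \<partial>lebesgue)"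
  proof (rule nn_integral_cong)
    fix x :: "real^'n"
    show "ennreal (u (Pw x)) * indicator St (Pw x) = ennreal (\<bar>det (matrix (g' x))\<bar> * f (g x)) * indicator S x"
    proof (cases "x \<in> S")
      case True
      have "linear (g' x)" using der[OF True] by (rule has_derivative_linear)
      then have "det (matrix (gt' (Pw x))) = det (matrix (g' x))"
        using det_conj[of "g' x"] by (simp add: gt'_def)
      then show ?thesis using True by (simp add: u_def St_def gt_def ft_def)
    next
      case False
      then show ?thesis by (simp add: St_def)
    qed
  qed
  finally show ?thesis using L wo by (simp add: u_def)
qed

locale setting =
  fixes A :: "(real^'n) set" and r :: real
    and \<rho>0 \<rho>1 :: "real^'n \<Rightarrow> real"
    and \<phi> :: "real^'n \<Rightarrow> real"
    and g :: "real^'n \<Rightarrow> real^'n"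
    and H :: "real^'n \<Rightarrow> real^'n^'n"
    and T :: "real^'n \<Rightarrow> real^'n"
  assumes dim: "CARD('n) \<ge> 2"
    and A_compact: "compact A" and A_convex: "convex A"
    and \<rho>0_meas: "\<rho>0 \<in> borel_measurable lebesgue"
    and \<rho>0_nonneg: "\<forall>x. \<rho>0 x \<ge> 0"
    and \<rho>0_supp: "\<forall>x. x \<notin> A \<longrightarrow> \<rho>0 x = 0"
    and \<rho>0_pos: "AE x in lebesgue. x \<in> A \<longrightarrow> \<rho>0 x > 0"
    and \<rho>0_prob: "(\<integral>\<^sup>+ x. ennreal (\<rho>0 x) \<partial>lebesgue) = 1"
    and \<rho>1_meas: "\<rho>1 \<in> borel_measurable lebesgue"
    and \<rho>1_nonneg: "\<forall>y. \<rho>1 y \<ge> 0"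
    and \<rho>1_supp: "\<forall>y. y \<notin> cball 0 r \<longrightarrow> \<rho>1 y = 0"
    and \<rho>1_pos: "AE y in lebesgue. y \<in> cball 0 r \<longrightarrow> \<rho>1 y > 0"
    and \<rho>1_prob: "(\<integral>\<^sup>+ y. ennreal (\<rho>1 y) \<partial>lebesgue) = 1"
    and \<phi>_cont: "continuous_on A \<phi>"
    and \<phi>_range: "\<forall>x\<in>A. 0 \<le> \<phi> x \<and> \<phi> x \<le> r"
    and \<phi>_sublevel: "\<forall>t. convex {x\<in>A. \<phi> x \<le> t}"
    and \<phi>_grad: "\<forall>x\<in>interior A. (\<phi> has_derivative (\<lambda>h. g x \<bullet> h)) (at x)"
    and g_deriv: "\<forall>x\<in>interior A. (g has_derivative (\<lambda>h. H x *v h)) (at x)"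
    and H_cont: "continuous_on (interior A) H"
    and g_nonzero: "\<forall>x\<in>interior A. g x \<noteq> 0"
    and T_def: "\<forall>x\<in>interior A. T x = \<phi> x *\<^sub>R (inverse (norm (g x)) *\<^sub>R g x)"
    and push: "\<forall>B\<in>sets borel. emeasure (density lebesgue \<rho>0) (T -` B) = emeasure (density lebesgue \<rho>1) B"
    and T_inj: "\<exists>S. S \<in> sets lebesgue \<and> S \<subseteq> A \<and>
                  emeasure (density lebesgue \<rho>0) (A - S) = 0 \<and> inj_on T S"
begin

abbreviation "\<mu> \<equiv> density lebesgue (\<lambda>x. ennreal (\<rho>0 x))"
abbreviation "\<nu> \<equiv> density lebesgue (\<lambda>x. ennreal (\<rho>1 x))"

lemma mu_emeasure: "X \<in> sets lebesgue \<Longrightarrow> emeasure \<mu> X = (\<integral>\<^sup>+x. ennreal (\<rho>0 x) * indicator X x \<partial>lebesgue)"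
  using \<rho>0_meas by (simp add: emeasure_density)

lemma nu_emeasure: "X \<in> sets lebesgue \<Longrightarrow> emeasure \<nu> X = (\<integral>\<^sup>+x. ennreal (\<rho>1 x) * indicator X x \<partial>lebesgue)"
  using \<rho>1_meas by (simp add: emeasure_density)

lemma nu_UNIV: "emeasure \<nu> UNIV = 1"
  using nu_emeasure[of UNIV] \<rho>1_prob by simp

lemma T_pre: assumes B: "B \<in> sets borel" shows "T -` B \<in> sets lebesgue"
proof (rule ccontr)
  assume nB: "T -` B \<notin> sets lebesgue"
  have "emeasure \<mu> (T -` B) = 0" using nB by (simp add: emeasure_notin_sets)
  then have n1: "emeasure \<nu> B = 0" using push B by simp
  have cB: "- B \<in> sets borel" using B by auto
  have "T -` (- B) = - (T -` B)" by auto
  moreover have "- (T -` B) \<notin> sets lebesgue"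
    using nB by (metis Compl_in_sets_lebesgue double_complement)
  ultimately have "emeasure \<mu> (T -` (- B)) = 0" by (simp add: emeasure_notin_sets)
  then have n2: "emeasure \<nu> (- B) = 0" using push cB by simp
  have Bl: "B \<in> sets lebesgue" "- B \<in> sets lebesgue" using B cB by auto
  have "emeasure \<nu> B + emeasure \<nu> (- B) = emeasure \<nu> (B \<union> - B)"
    by (rule plus_emeasure) (use Bl in auto)
  then have "emeasure \<nu> UNIV = 0" using n1 n2 by simp
  then show False using nu_UNIV by simp
qed

lemma mu_null: assumes "X \<in> null_sets lebesgue" shows "emeasure \<mu> X = 0"
proof -
  have "AE x in lebesgue. x \<notin> X" using assms by (rule AE_not_in)
  then have "X \<in> null_sets \<mu>"
    using assms \<rho>0_meas by (subst null_sets_density_iff) auto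
  then show ?thesis by (rule null_setsD1)
qed

lemma nu_null: assumes "X \<in> null_sets lebesgue" shows "emeasure \<nu> X = 0"
proof -
  have "AE x in lebesgue. x \<notin> X" using assms by (rule AE_not_in)
  then have "X \<in> null_sets \<nu>"
    using assms \<rho>1_meas by (subst null_sets_density_iff) auto
  then show ?thesis by (rule null_setsD1)
qed

lemma mu_zero_null:
  assumes X: "X \<in> sets lebesgue" and XA: "X \<subseteq> A" and z: "emeasure \<mu> X = 0"
  shows "X \<in> null_sets lebesgue"
proof -
  have "X \<in> null_sets \<mu>" using X z by (intro null_setsI) auto
  then have "AE x in lebesgue. x \<in> X \<longrightarrow> ennreal (\<rho>0 x) = 0"
    using \<rho>0_meas by (subst (asm) null_sets_density_iff) auto
  then have "AE x in lebesgue. x \<notin> X"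
    using \<rho>0_pos by eventually_elim (use XA in \<open>auto simp: ennreal_eq_0_iff\<close>)
  then show ?thesis
    using completion.AE_iff_null_sets[where M=lborel and P="\<lambda>x. x \<notin> X"] by simp
qed


definition "Sinj = (SOME S. S \<in> sets lebesgue \<and> S \<subseteq> A \<and> emeasure \<mu> (A - S) = 0 \<and> inj_on T S)"

lemma Sinj: "Sinj \<in> sets lebesgue" "Sinj \<subseteq> A" "emeasure \<mu> (A - Sinj) = 0" "inj_on T Sinj"
  using someI_ex[OF T_inj] unfolding Sinj_def by auto

definition "V = Sinj \<inter> interior A"

lemma A_sets: "A \<in> sets lebesgue"
  using A_compact by (simp add: compact_imp_closed borel_closed)

lemma V_sets: "V \<in> sets lebesgue"
  unfolding V_def using Sinj(1) by (intro sets.Int) (auto intro: borel_open)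

lemma V_sub: "V \<subseteq> interior A" "V \<subseteq> A" "V \<subseteq> Sinj"
  unfolding V_def using interior_subset by auto

lemma frontier_null: "A - interior A \<in> null_sets lebesgue"
proof -
  have "negligible (frontier A)" by (rule negligible_convex_frontier[OF A_convex])
  then have "frontier A \<in> null_sets lebesgue" by (simp add: negligible_iff_null_sets)
  moreover have "A - interior A = frontier A"
    using A_compact by (simp add: frontier_def compact_imp_closed closure_closed)
  ultimately show ?thesis by simp
qed

lemma muV: "emeasure \<mu> (- V) = 0"
proof -
  have "- A \<in> null_sets \<mu>"
  proof -
    have "AE x in lebesgue. x \<in> - A \<longrightarrow> ennreal (\<rho>0 x) = 0" using \<rho>0_supp by auto
    then show ?thesis using A_sets \<rho>0_meas by (subst null_sets_density_iff) (auto simp: Compl_in_sets_lebesgue)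
  qed
  moreover have "A - Sinj \<in> null_sets \<mu>"
    using Sinj A_sets by (intro null_setsI) auto
  moreover have "A - interior A \<in> null_sets \<mu>"
    using mu_null[OF frontier_null] frontier_null by (intro null_setsI) auto
  ultimately have "(- A) \<union> (A - Sinj) \<union> (A - interior A) \<in> null_sets \<mu>" by auto
  moreover have "(- A) \<union> (A - Sinj) \<union> (A - interior A) = - V" using interior_subset[of A] by (auto simp: V_def)
  ultimately show ?thesis by (metis null_setsD1)
qed

lemma AE_V: "AE x in lebesgue. x \<in> A \<longrightarrow> x \<in> V"
proof -
  have n1: "A - Sinj \<in> null_sets lebesgue"
    using Sinj A_sets by (intro mu_zero_null) auto
  have "(A - Sinj) \<union> (A - interior A) \<in> null_sets lebesgue" using n1 frontier_null by auto
  then have "AE x in lebesgue. x \<notin> (A - Sinj) \<union> (A - interior A)" by (rule AE_not_in)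
  then show ?thesis by eventually_elim (auto simp: V_def)
qed


lemma Teq: "y \<in> interior A \<Longrightarrow> T y = \<phi> y *\<^sub>R nmapf g y"
  using T_def by (simp add: nmapf_def)

lemma T_deriv: "x \<in> interior A \<Longrightarrow> (T has_derivative DTf \<phi> g H x) (at x)"
  using \<phi>_grad g_deriv g_nonzero Teq
  by (intro deriv_T[where U="interior A" and x=x and \<phi>=\<phi> and g=g and H=H and T=T]) auto

lemma T_diff_on: "T differentiable_on interior A"
  using T_deriv by (auto simp: differentiable_on_def differentiable_def intro: has_derivative_at_withinI)

lemma mu_image:
  assumes E: "E \<in> sets lebesgue" and EV: "E \<subseteq> V"
  shows "emeasure \<mu> E = emeasure \<nu> (T ` E)"
proof -
  have Td: "T differentiable_on E" using T_diff_on EV V_sub by (blast intro: differentiable_on_subset)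
  have TE: "T ` E \<in> sets (completion lborel)"
    using differentiable_image_in_sets_lebesgue[OF E _ Td] by simp
  define B1 where "B1 = main_part lborel (T ` E)"
  obtain N where N: "N \<in> null_sets lborel" "null_part lborel (T ` E) \<subseteq> N"
    using null_part[OF TE] by blast
  define B2 where "B2 = B1 \<union> N"
  have B1b: "B1 \<in> sets borel" using main_part_sets[OF TE] by (simp add: B1_def)
  have Nb: "N \<in> sets borel" using N by auto
  have B2b: "B2 \<in> sets borel" using B1b Nb by (simp add: B2_def)
  have un: "B1 \<union> null_part lborel (T ` E) = T ` E"
    unfolding B1_def by (rule main_part_null_part_Un[OF TE])
  have sub1: "B1 \<subseteq> T ` E" and sub2: "T ` E \<subseteq> B2" using un N by (auto simp: B2_def)
  have Nl: "N \<in> null_sets lebesgue" using N by (simp add: null_sets_completionI)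
  have nN: "emeasure \<nu> N = 0" by (rule nu_null[OF Nl])
  have B1l: "B1 \<in> sets lebesgue" "B2 \<in> sets lebesgue" "N \<in> sets lebesgue" using B1b B2b Nb by auto
  have TEl: "T ` E \<in> sets lebesgue" using TE by simp
  have nu1: "emeasure \<nu> B1 \<le> emeasure \<nu> (T ` E)" using sub1 TEl by (intro emeasure_mono) auto
  have nu2: "emeasure \<nu> (T ` E) \<le> emeasure \<nu> B2" using sub2 B1l by (intro emeasure_mono) auto
  have nu3: "emeasure \<nu> B2 \<le> emeasure \<nu> B1 + emeasure \<nu> N"
    unfolding B2_def using B1l by (intro emeasure_subadditive) auto
  have eqB: "emeasure \<nu> (T ` E) = emeasure \<nu> B1" "emeasure \<nu> B2 = emeasure \<nu> B1"
    using nu1 nu2 nu3 nN by (auto intro: antisym order.trans)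
  have pre1: "T -` B1 \<in> sets lebesgue" "T -` B2 \<in> sets lebesgue" using T_pre B1b B2b by auto
  have "emeasure \<mu> E \<le> emeasure \<mu> (T -` B2)"
    using sub2 pre1 by (intro emeasure_mono) auto
  also have "\<dots> = emeasure \<nu> B2" using push B2b by simp
  finally have le1: "emeasure \<mu> E \<le> emeasure \<nu> B1" using eqB by simp
  have "T -` B1 \<subseteq> E \<union> - V"
  proof
    fix x assume x: "x \<in> T -` B1"
    show "x \<in> E \<union> - V"
    proof (cases "x \<in> V")
      case True
      then have "T x \<in> T ` E" using x sub1 by auto
      then obtain e where e: "e \<in> E" "T x = T e" by auto
      have "x = e" using Sinj(4) e True EV V_sub by (meson inj_onD subsetD)
      then show ?thesis using e by simp
    qed simp
  qed
  then have "emeasure \<mu> (T -` B1) \<le> emeasure \<mu> (E \<union> - V)"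
    using E V_sets by (intro emeasure_mono) (auto simp: Compl_in_sets_lebesgue)
  also have "\<dots> \<le> emeasure \<mu> E + emeasure \<mu> (- V)"
    using E V_sets by (intro emeasure_subadditive) (auto simp: Compl_in_sets_lebesgue)
  also have "\<dots> = emeasure \<mu> E" using muV by simp
  finally have "emeasure \<nu> B1 \<le> emeasure \<mu> E" using push B1b by simp
  with le1 eqB show ?thesis by (auto intro: antisym)
qed


definition "r0 = (SOME h. h \<in> borel_measurable lborel \<and> (AE x in lborel. \<rho>1 x = h x))"

lemma r0: "r0 \<in> borel_measurable lborel" "AE x in lborel. \<rho>1 x = r0 x"
proof -
  have "\<exists>h. h \<in> borel_measurable lborel \<and> (AE x in lborel. \<rho>1 x = h x)"
    using completion_ex_borel_measurable_real[OF \<rho>1_meas] by blast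
  from someI_ex[OF this] show "r0 \<in> borel_measurable lborel" "AE x in lborel. \<rho>1 x = r0 x"
    unfolding r0_def by auto
qed

definition "r1 x = max 0 (r0 x)"

lemma r1_borel: "r1 \<in> borel_measurable borel"
  using r0(1) unfolding r1_def by (simp add: measurable_lborel1) 

lemma r1_nonneg: "r1 y \<ge> 0" by (simp add: r1_def)

lemma r1_AE: "AE x in lborel. \<rho>1 x = r1 x"
  using r0(2)
proof eventually_elim
  fix x assume "\<rho>1 x = r0 x"
  then show "\<rho>1 x = r1 x" using \<rho>1_nonneg by (simp add: r1_def) (metis max.absorb2)
qed

lemma r1_AE_leb: "AE x in lebesgue. \<rho>1 x = r1 x"
  using AE_completion[OF r1_AE] .

lemma r1_int: "integrable lebesgue r1"
proof (rule integrableI_nonneg)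
  show "r1 \<in> borel_measurable lebesgue" using r1_borel by (simp add: measurable_completion)
  show "AE x in lebesgue. 0 \<le> r1 x" by (simp add: r1_nonneg)
  have "(\<integral>\<^sup>+ x. ennreal (r1 x) \<partial>lebesgue) = (\<integral>\<^sup>+ x. ennreal (\<rho>1 x) \<partial>lebesgue)"
    using r1_AE_leb by (intro nn_integral_cong_AE) auto
  then show "(\<integral>\<^sup>+ x. ennreal (r1 x) \<partial>lebesgue) < \<infinity>" using \<rho>1_prob by simp
qed

lemma nu_r1: "X \<in> sets lebesgue \<Longrightarrow> emeasure \<nu> X = (\<integral>\<^sup>+x. ennreal (r1 x) * indicator X x \<partial>lebesgue)"
  using r1_AE_leb by (subst nu_emeasure) (auto intro!: nn_integral_cong_AE)

abbreviation "J x \<equiv> det (matrix (DTf \<phi> g H x))"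

lemma key:
  assumes E: "E \<in> sets lebesgue" and EV: "E \<subseteq> V"
  shows "(\<integral>\<^sup>+x. ennreal (\<rho>0 x) * indicator E x \<partial>lebesgue) =
         (\<integral>\<^sup>+x. ennreal (\<bar>J x\<bar> * r1 (T x)) * indicator E x \<partial>lebesgue)"
proof -
  have der: "(T has_derivative DTf \<phi> g H x) (at x within E)" if "x \<in> E" for x
    using T_deriv[of x] that EV V_sub by (auto intro: has_derivative_at_withinI)
  have inj: "inj_on T E" using Sinj(4) EV V_sub by (blast intro: inj_on_subset)
  have TEl: "T ` E \<in> sets lebesgue"
  proof -
    have Td: "T differentiable_on E" using T_diff_on EV V_sub by (blast intro: differentiable_on_subset)
    show ?thesis using differentiable_image_in_sets_lebesgue[OF E _ Td] by simp
  qed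
  have "(\<integral>\<^sup>+x. ennreal (\<rho>0 x) * indicator E x \<partial>lebesgue) = emeasure \<mu> E"
    using mu_emeasure[OF E] by simp
  also have "\<dots> = emeasure \<nu> (T ` E)" by (rule mu_image[OF E EV])
  also have "\<dots> = (\<integral>\<^sup>+y. ennreal (r1 y) * indicator (T ` E) y \<partial>lebesgue)" by (rule nu_r1[OF TEl])
  also have "\<dots> = (\<integral>\<^sup>+x. ennreal (\<bar>J x\<bar> * r1 (T x)) * indicator E x \<partial>lebesgue)"
    by (rule cov_nn[OF E der inj r1_nonneg r1_int r1_borel])
  finally show ?thesis .
qed

lemma cont_phi: "continuous_on (interior A) \<phi>"
  using \<phi>_grad by (intro differentiable_imp_continuous_on)
    (auto simp: differentiable_on_def differentiable_def intro: has_derivative_at_withinI)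

lemma cont_g: "continuous_on (interior A) g"
  using g_deriv by (intro differentiable_imp_continuous_on)
    (auto simp: differentiable_on_def differentiable_def intro: has_derivative_at_withinI)

lemma cont_J: "continuous_on (interior A) J"
proof -
  have cg: "continuous_on (interior A) (\<lambda>x. g x $ i)" for i
    using cont_g by (intro continuous_intros)
  have ng: "continuous_on (interior A) (\<lambda>x. inverse (norm (g x)))"
    using cont_g g_nonzero by (intro continuous_intros) auto
  show ?thesis
    unfolding det_def matrix_def DTf_def Dnf_def nmapf_def
    using cont_phi cont_g H_cont ng g_nonzero
    by (simp add: inner_vec_def matrix_vector_mult_def, intro continuous_intros) auto
qed


lemma AE_jac: "AE x in lebesgue. x \<in> V \<longrightarrow> \<rho>0 x = \<bar>J x\<bar> * r1 (T x)"
proof -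
  define w where "w x = \<bar>J x\<bar> * r1 (T x)" for x
  define F where "F x = ennreal (\<rho>0 x) * indicator V x" for x
  define G where "G x = ennreal (w x) * indicator V x" for x
  have intA: "interior A \<in> sets lebesgue" by (auto intro: borel_open)
  have wm: "w \<in> borel_measurable (lebesgue_on (interior A))"
  proof -
    have "J \<in> borel_measurable (lebesgue_on (interior A))"
      by (rule continuous_imp_measurable_on_sets_lebesgue[OF cont_J intA])
    moreover have "T \<in> borel_measurable (lebesgue_on (interior A))"
      by (rule continuous_imp_measurable_on_sets_lebesgue[OF differentiable_imp_continuous_on[OF T_diff_on] intA])
    then have "(\<lambda>x. r1 (T x)) \<in> borel_measurable (lebesgue_on (interior A))"
      using r1_borel by (simp add: measurable_compose[of T _ borel r1])
    ultimately show ?thesis unfolding w_def by measurable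
  qed
  have wm2: "(\<lambda>x. if x \<in> interior A then w x else 0) \<in> borel_measurable lebesgue"
    using borel_measurable_if[OF intA] wm by blast
  have Geq: "G = (\<lambda>x. ennreal (if x \<in> interior A then w x else 0) * indicator V x)"
    using V_sub by (auto simp: G_def fun_eq_iff indicator_def)
  have Gm: "G \<in> borel_measurable lebesgue"
    unfolding Geq using wm2 V_sets by measurable
  have Fm: "F \<in> borel_measurable lebesgue"
    unfolding F_def using \<rho>0_meas V_sets by measurable
  have fin: "integral\<^sup>N lebesgue F \<noteq> \<infinity>"
  proof -
    have "integral\<^sup>N lebesgue F \<le> (\<integral>\<^sup>+ x. ennreal (\<rho>0 x) \<partial>lebesgue)"
      unfolding F_def by (intro nn_integral_mono) (auto simp: indicator_def)
    then show ?thesis using \<rho>0_prob by (auto simp: top_unique)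
  qed
  have "density lebesgue F = density lebesgue G"
  proof (rule measure_eqI)
    show "sets (density lebesgue F) = sets (density lebesgue G)" by simp
    fix X assume "X \<in> sets (density lebesgue F)"
    then have X: "X \<in> sets lebesgue" by simp
    have XV: "X \<inter> V \<in> sets lebesgue" using X V_sets by auto
    have "emeasure (density lebesgue F) X = (\<integral>\<^sup>+x. F x * indicator X x \<partial>lebesgue)"
      by (rule emeasure_density[OF Fm X])
    also have "\<dots> = (\<integral>\<^sup>+x. ennreal (\<rho>0 x) * indicator (X \<inter> V) x \<partial>lebesgue)"
      by (intro nn_integral_cong) (auto simp: F_def indicator_def)
    also have "\<dots> = (\<integral>\<^sup>+x. ennreal (w x) * indicator (X \<inter> V) x \<partial>lebesgue)"
      unfolding w_def by (rule key[OF XV]) auto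
    also have "\<dots> = (\<integral>\<^sup>+x. G x * indicator X x \<partial>lebesgue)"
      by (intro nn_integral_cong) (auto simp: G_def indicator_def)
    also have "\<dots> = emeasure (density lebesgue G) X"
      by (rule emeasure_density[OF Gm X, symmetric])
    finally show "emeasure (density lebesgue F) X = emeasure (density lebesgue G) X" .
  qed
  then have "AE x in lebesgue. F x = G x"
    using finite_density_unique[OF Fm Gm _ _ fin] by simp
  then show ?thesis
  proof eventually_elim
    fix x assume "F x = G x"
    moreover have "w x \<ge> 0" by (simp add: w_def r1_nonneg)
    ultimately show "x \<in> V \<longrightarrow> \<rho>0 x = \<bar>J x\<bar> * r1 (T x)"
      using \<rho>0_nonneg by (auto simp: F_def G_def w_def)
  qed
qed


lemma AE_r1T: "AE x in lebesgue. x \<in> V \<longrightarrow> \<rho>1 (T x) = r1 (T x)"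
proof -
  obtain N where N0: "{x \<in> space lborel. \<not> \<rho>1 x = r1 x} \<subseteq> N" "emeasure lborel N = 0" "N \<in> sets lborel"
    using r1_AE by (rule AE_E)
  have N: "{x \<in> space lborel. \<not> \<rho>1 x = r1 x} \<subseteq> N" "N \<in> null_sets lborel"
    using N0 by (auto intro: null_setsI)
  have Nb: "N \<in> sets borel" using N(2) by auto
  have Nl: "N \<in> null_sets lebesgue" using N(2) by (simp add: null_sets_completionI)
  define X where "X = T -` N \<inter> A"
  have Xl: "X \<in> sets lebesgue" unfolding X_def using T_pre[OF Nb] A_sets by auto
  have "emeasure \<mu> X \<le> emeasure \<mu> (T -` N)"
    using T_pre[OF Nb] unfolding X_def by (intro emeasure_mono) auto
  also have "\<dots> = emeasure \<nu> N" using push Nb by simp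
  also have "\<dots> = 0" by (rule nu_null[OF Nl])
  finally have "emeasure \<mu> X = 0" by simp
  then have "X \<in> null_sets lebesgue" using Xl by (intro mu_zero_null) (auto simp: X_def)
  then have "AE x in lebesgue. x \<notin> X" by (rule AE_not_in)
  then show ?thesis
    by eventually_elim (use N(1) V_sub in \<open>auto simp: X_def\<close>)
qed

theorem main:
  shows "AE x in lebesgue. x \<in> A \<longrightarrow>
     (let n = (\<lambda>y. inverse (norm (g y)) *\<^sub>R g y);
          K = gauss_curvature n x
      in det (matrix (frechet_derivative T (at x)))
           = norm (g x) * \<phi> x ^ (CARD('n) - 1) * K
         \<and> \<rho>0 x = \<rho>1 (\<phi> x *\<^sub>R n x) * norm (g x) * \<phi> x ^ (CARD('n) - 1) * K)"
  using AE_V AE_jac AE_r1T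
proof eventually_elim
  fix x
  assume a1: "x \<in> A \<longrightarrow> x \<in> V" and a2: "x \<in> V \<longrightarrow> \<rho>0 x = \<bar>J x\<bar> * r1 (T x)"
    and a3: "x \<in> V \<longrightarrow> \<rho>1 (T x) = r1 (T x)"
  have neq: "(\<lambda>y. inverse (norm (g y)) *\<^sub>R g y) = nmapf g" by (simp add: nmapf_def fun_eq_iff)
  show "x \<in> A \<longrightarrow>
     (let n = (\<lambda>y. inverse (norm (g y)) *\<^sub>R g y);
          K = gauss_curvature n x
      in det (matrix (frechet_derivative T (at x)))
           = norm (g x) * \<phi> x ^ (CARD('n) - 1) * K
         \<and> \<rho>0 x = \<rho>1 (\<phi> x *\<^sub>R n x) * norm (g x) * \<phi> x ^ (CARD('n) - 1) * K)"
  proof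
    assume xA: "x \<in> A"
    then have xV: "x \<in> V" using a1 by simp
    then have xi: "x \<in> interior A" using V_sub by auto
    have dphi: "(\<phi> has_derivative (\<lambda>h. g x \<bullet> h)) (at x)" using \<phi>_grad xi by auto
    have dg: "(g has_derivative (\<lambda>h. H x *v h)) (at x)" using g_deriv xi by auto
    have gnz: "g x \<noteq> 0" using g_nonzero xi by auto
    have d1: "det (matrix (frechet_derivative T (at x))) =
        norm (g x) * \<phi> x ^ (CARD('n) - 1) * gauss_curvature (nmapf g) x"
      by (rule pointwise_det[where U="interior A" and x=x and \<phi>=\<phi> and g=g and H=H and T=T,
            OF dim open_interior xi dphi dg gnz Teq])
    have fT: "frechet_derivative T (at x) = DTf \<phi> g H x"
      using frechet_derivative_at[OF T_deriv[OF xi]] by simp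
    have psd: "v \<bullet> (H x *v v) \<ge> 0" if "g x \<bullet> v = 0" for v
      using \<phi>_grad
      by (intro qc_second[where A=A and x=x and \<phi>=\<phi> and g=g and H=H, OF xi _ _ dg gnz that])
         (use \<phi>_sublevel in auto)
    have phi0: "\<phi> x \<ge> 0" using \<phi>_range xA by auto
    have Jnn: "J x \<ge> 0"
      by (rule DTf_det_nonneg[where g=g and x=x and \<phi>=\<phi> and H=H, OF gnz phi0 psd])
    have r: "\<rho>0 x = J x * \<rho>1 (T x)" using a2 a3 xV Jnn by simp
    have Tx: "T x = \<phi> x *\<^sub>R nmapf g x" using Teq[OF xi] .
    have Jx: "J x = norm (g x) * \<phi> x ^ (CARD('n) - 1) * gauss_curvature (nmapf g) x"
      using d1 fT by simp
    show "let n = (\<lambda>y. inverse (norm (g y)) *\<^sub>R g y);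
          K = gauss_curvature n x
      in det (matrix (frechet_derivative T (at x)))
           = norm (g x) * \<phi> x ^ (CARD('n) - 1) * K
         \<and> \<rho>0 x = \<rho>1 (\<phi> x *\<^sub>R n x) * norm (g x) * \<phi> x ^ (CARD('n) - 1) * K"
      unfolding neq Let_def using d1 r Tx Jx by (simp add: mult_ac)
  qed
qed

end

theorem mainTheorem2:
  fixes A :: "(real^'n) set" and r :: real
    and \<rho>0 \<rho>1 :: "real^'n \<Rightarrow> real"
    and \<phi> :: "real^'n \<Rightarrow> real"
    and g :: "real^'n \<Rightarrow> real^'n"
    and H :: "real^'n \<Rightarrow> real^'n^'n"
    and T :: "real^'n \<Rightarrow> real^'n"
  assumes dim: "CARD('n) \<ge> 2"
    and A_compact: "compact A" and A_convex: "convex A"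
    and \<rho>0_meas: "\<rho>0 \<in> borel_measurable lebesgue"
    and \<rho>0_nonneg: "\<forall>x. \<rho>0 x \<ge> 0"
    and \<rho>0_supp: "\<forall>x. x \<notin> A \<longrightarrow> \<rho>0 x = 0"
    and \<rho>0_pos: "AE x in lebesgue. x \<in> A \<longrightarrow> \<rho>0 x > 0"
    and \<rho>0_prob: "(\<integral>\<^sup>+ x. ennreal (\<rho>0 x) \<partial>lebesgue) = 1"
    and \<rho>1_meas: "\<rho>1 \<in> borel_measurable lebesgue"
    and \<rho>1_nonneg: "\<forall>y. \<rho>1 y \<ge> 0"
    and \<rho>1_supp: "\<forall>y. y \<notin> cball 0 r \<longrightarrow> \<rho>1 y = 0"
    and \<rho>1_pos: "AE y in lebesgue. y \<in> cball 0 r \<longrightarrow> \<rho>1 y > 0"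
    and \<rho>1_prob: "(\<integral>\<^sup>+ y. ennreal (\<rho>1 y) \<partial>lebesgue) = 1"
    and \<phi>_cont: "continuous_on A \<phi>"
    and \<phi>_range: "\<forall>x\<in>A. 0 \<le> \<phi> x \<and> \<phi> x \<le> r"
    and \<phi>_sublevel: "\<forall>t. convex {x\<in>A. \<phi> x \<le> t}"
    and \<phi>_grad: "\<forall>x\<in>interior A. (\<phi> has_derivative (\<lambda>h. g x \<bullet> h)) (at x)"
    and g_deriv: "\<forall>x\<in>interior A. (g has_derivative (\<lambda>h. H x *v h)) (at x)"
    and H_cont: "continuous_on (interior A) H"
    and g_nonzero: "\<forall>x\<in>interior A. g x \<noteq> 0"
    and T_def: "\<forall>x\<in>interior A. T x = \<phi> x *\<^sub>R (inverse (norm (g x)) *\<^sub>R g x)"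
    and push: "\<forall>B\<in>sets borel. emeasure (density lebesgue \<rho>0) (T -` B) = emeasure (density lebesgue \<rho>1) B"
    and T_inj: "\<exists>S. S \<in> sets lebesgue \<and> S \<subseteq> A \<and>
                  emeasure (density lebesgue \<rho>0) (A - S) = 0 \<and> inj_on T S"
  shows "AE x in lebesgue. x \<in> A \<longrightarrow>
     (let n = (\<lambda>y. inverse (norm (g y)) *\<^sub>R g y);
          K = gauss_curvature n x
      in det (matrix (frechet_derivative T (at x)))
           = norm (g x) * \<phi> x ^ (CARD('n) - 1) * K
         \<and> \<rho>0 x = \<rho>1 (\<phi> x *\<^sub>R n x) * norm (g x) * \<phi> x ^ (CARD('n) - 1) * K)"
  proof -
  interpret setting A r \<rho>0 \<rho>1 \<phi> g H T
    by (rule setting.intro[OF assms])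
  show ?thesis by (rule main)
qed

end
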